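(* Let $C\neq\{1\}$ be a finite cyclic group generated by $s$, let $\langle t\rangle\cong\mathbb{Z}$, and let $G=\langle a\rangle\wr(C\wr\langle t\rangle)$ with $\langle a\rangle\cong\mathbb{Z}$. Put $x=ts$, $y=t$ and $H=\langle x,y,[x,a]a,[y,a]a\rangle\le G$. Then $\mathrm{Dist}^G_H(n)\succeq 2^n$.
   Context: Wreath products: for groups $L,K$, $L\wr K=W\rtimes K$ with $W=\bigoplus_{K}L$. Elements are pairs $(f,k)$ with $f:K\to L$ finitely supported, $k\in K$, multiplication $(f,k)(\hat f,\hat k)=(f+\hat f^{k},k\hat k)$ with $\hat f^{k}(v)=\hat f(vk^{-1})$. $K$ is identified with $\{(0,k)\}$ and $L$ with the $e$-indexed summand of $W$. Convention: $[x,a]=x^{-1}a^{-1}xa$. Distortion: if $G$ has finite generating set $S$ and a subgroup $H$ has finite generating set $T$, $\mathrm{Dist}^G_H(n)=\max\{|g|_T : g\in H,\ |g|_S\le n\}$, with $|g|_S$ the word length on $S^{\pm1}$. $f\preceq g$ means there is $C>0$ with $f(n)\le Cg(Cn+C)+Cn+C$ for all $n$. $G$ is generated by $\{a,s,t\}$ and $H$ by the four listed elements. *)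

theory Defs
  imports Complex_Main "HOL-Algebra.Elementary_Groups" "HOL-Algebra.Generated_Groups"
begin

definition wreath :: "('l,'p) monoid_scheme \<Rightarrow> ('k,'q) monoid_scheme \<Rightarrow> (('k \<Rightarrow> 'l) \<times> 'k) monoid" where
  "wreath L K = \<lparr>carrier = {(f,k). k \<in> carrier K \<and> f \<in> extensional (carrier K)
                     \<and> f \<in> carrier K \<rightarrow> carrier L \<and> finite {v \<in> carrier K. f v \<noteq> \<one>\<^bsub>L\<^esub>}},
     mult = (\<lambda>(f,k) (g,l). ((\<lambda>v\<in>carrier K. f v \<otimes>\<^bsub>L\<^esub> g (v \<otimes>\<^bsub>K\<^esub> inv\<^bsub>K\<^esub> k)), k \<otimes>\<^bsub>K\<^esub> l)),
     one = ((\<lambda>v\<in>carrier K. \<one>\<^bsub>L\<^esub>), \<one>\<^bsub>K\<^esub>)\<rparr>"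

definition wr_top :: "('l,'p) monoid_scheme \<Rightarrow> ('k,'q) monoid_scheme \<Rightarrow> 'k \<Rightarrow> ('k \<Rightarrow> 'l) \<times> 'k" where
  "wr_top L K k = ((\<lambda>v\<in>carrier K. \<one>\<^bsub>L\<^esub>), k)"

definition wr_base :: "('l,'p) monoid_scheme \<Rightarrow> ('k,'q) monoid_scheme \<Rightarrow> 'l \<Rightarrow> ('k \<Rightarrow> 'l) \<times> 'k" where
  "wr_base L K x = ((\<lambda>v\<in>carrier K. if v = \<one>\<^bsub>K\<^esub> then x else \<one>\<^bsub>L\<^esub>), \<one>\<^bsub>K\<^esub>)"

definition commutator :: "('a,'b) monoid_scheme \<Rightarrow> 'a \<Rightarrow> 'a \<Rightarrow> 'a" where
  "commutator G x a = inv\<^bsub>G\<^esub> x \<otimes>\<^bsub>G\<^esub> inv\<^bsub>G\<^esub> a \<otimes>\<^bsub>G\<^esub> x \<otimes>\<^bsub>G\<^esub> a"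

definition word_prod :: "('a,'b) monoid_scheme \<Rightarrow> 'a list \<Rightarrow> 'a" where
  "word_prod G xs = foldr (\<lambda>x y. x \<otimes>\<^bsub>G\<^esub> y) xs \<one>\<^bsub>G\<^esub>"

definition word_length :: "('a,'b) monoid_scheme \<Rightarrow> 'a set \<Rightarrow> 'a \<Rightarrow> nat" where
  "word_length G S g = (LEAST n. \<exists>xs. length xs = n \<and> set xs \<subseteq> S \<union> m_inv G ` S \<and> word_prod G xs = g)"

definition distortion :: "('a,'b) monoid_scheme \<Rightarrow> 'a set \<Rightarrow> 'a set \<Rightarrow> nat \<Rightarrow> nat" where
  "distortion G S T n = Sup {word_length G T h | h. h \<in> generate G T \<and> word_length G S h \<le> n}"

definition dominated :: "(nat \<Rightarrow> real) \<Rightarrow> (nat \<Rightarrow> real) \<Rightarrow> bool" where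
  "dominated f g = (\<exists>C::nat. C > 0 \<and> (\<forall>n. f n \<le> real C * g (C * n + C) + real C * real n + real C))"

end

theory Submission
  imports Defs
begin


lemma wreath_carrier_iff:
  "(f,k) \<in> carrier (wreath L K) \<longleftrightarrow> k \<in> carrier K \<and> f \<in> extensional (carrier K)
     \<and> f \<in> carrier K \<rightarrow> carrier L \<and> finite {v \<in> carrier K. f v \<noteq> \<one>\<^bsub>L\<^esub>}"
  by (simp add: wreath_def)

lemma wreath_mult:
  "(f,k) \<otimes>\<^bsub>wreath L K\<^esub> (g,l) = ((\<lambda>v\<in>carrier K. f v \<otimes>\<^bsub>L\<^esub> g (v \<otimes>\<^bsub>K\<^esub> inv\<^bsub>K\<^esub> k)), k \<otimes>\<^bsub>K\<^esub> l)"
  by (simp add: wreath_def)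

lemma wreath_one: "\<one>\<^bsub>wreath L K\<^esub> = ((\<lambda>v\<in>carrier K. \<one>\<^bsub>L\<^esub>), \<one>\<^bsub>K\<^esub>)"
  by (simp add: wreath_def)

lemma wreath_m_closed:
  assumes L: "group L" and K: "group K" and "x \<in> carrier (wreath L K)" "y \<in> carrier (wreath L K)"
  shows "x \<otimes>\<^bsub>wreath L K\<^esub> y \<in> carrier (wreath L K)"
proof -
  interpret L: group L by (rule L)
  interpret K: group K by (rule K)
  obtain f k g l where xy: "x = (f,k)" "y = (g,l)" by fastforce
  have h: "k \<in> carrier K" "f \<in> carrier K \<rightarrow> carrier L" "finite {v \<in> carrier K. f v \<noteq> \<one>\<^bsub>L\<^esub>}"
    "l \<in> carrier K" "g \<in> carrier K \<rightarrow> carrier L" "finite {v \<in> carrier K. g v \<noteq> \<one>\<^bsub>L\<^esub>}"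
    using assms xy by (auto simp: wreath_carrier_iff)
  have "{v \<in> carrier K. f v \<otimes>\<^bsub>L\<^esub> g (v \<otimes>\<^bsub>K\<^esub> inv\<^bsub>K\<^esub> k) \<noteq> \<one>\<^bsub>L\<^esub>}
     \<subseteq> {v \<in> carrier K. f v \<noteq> \<one>\<^bsub>L\<^esub>} \<union> (\<lambda>u. u \<otimes>\<^bsub>K\<^esub> k) ` {v \<in> carrier K. g v \<noteq> \<one>\<^bsub>L\<^esub>}"
  proof
    fix v assume v: "v \<in> {v \<in> carrier K. f v \<otimes>\<^bsub>L\<^esub> g (v \<otimes>\<^bsub>K\<^esub> inv\<^bsub>K\<^esub> k) \<noteq> \<one>\<^bsub>L\<^esub>}"
    show "v \<in> {v \<in> carrier K. f v \<noteq> \<one>\<^bsub>L\<^esub>} \<union> (\<lambda>u. u \<otimes>\<^bsub>K\<^esub> k) ` {v \<in> carrier K. g v \<noteq> \<one>\<^bsub>L\<^esub>}"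
    proof (cases "f v = \<one>\<^bsub>L\<^esub>")
      case True
      then have "g (v \<otimes>\<^bsub>K\<^esub> inv\<^bsub>K\<^esub> k) \<noteq> \<one>\<^bsub>L\<^esub>" using v h by auto
      moreover have "v = (v \<otimes>\<^bsub>K\<^esub> inv\<^bsub>K\<^esub> k) \<otimes>\<^bsub>K\<^esub> k" using v h by (simp add: K.m_assoc)
      ultimately show ?thesis using v h by blast
    qed (use v in auto)
  qed
  then have fin: "finite {v \<in> carrier K. f v \<otimes>\<^bsub>L\<^esub> g (v \<otimes>\<^bsub>K\<^esub> inv\<^bsub>K\<^esub> k) \<noteq> \<one>\<^bsub>L\<^esub>}"
    using h by (meson finite_Un finite_imageI finite_subset)
  show ?thesis using h unfolding xy wreath_mult
    by (auto simp: wreath_carrier_iff Pi_def intro!: finite_subset[OF _ fin])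
  qed

lemma wreath_group:
  assumes L: "group L" and K: "comm_group K"
  shows "group (wreath L K)"
proof (rule groupI)
  interpret L: group L by (rule L)
  interpret K: comm_group K by (rule K)
  show "\<one>\<^bsub>wreath L K\<^esub> \<in> carrier (wreath L K)"
    by (simp add: wreath_def)
  show "x \<otimes>\<^bsub>wreath L K\<^esub> y \<in> carrier (wreath L K)" if "x \<in> carrier (wreath L K)" "y \<in> carrier (wreath L K)" for x y
    using wreath_m_closed[OF L K.is_group that] .
  show "x \<otimes>\<^bsub>wreath L K\<^esub> y \<otimes>\<^bsub>wreath L K\<^esub> z = x \<otimes>\<^bsub>wreath L K\<^esub> (y \<otimes>\<^bsub>wreath L K\<^esub> z)"
    if "x \<in> carrier (wreath L K)" "y \<in> carrier (wreath L K)" "z \<in> carrier (wreath L K)" for x y z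
  proof -
    obtain f k g l h m where xy: "x = (f,k)" "y = (g,l)" "z = (h,m)" by (metis prod.exhaust)
    have c: "k \<in> carrier K" "f \<in> carrier K \<rightarrow> carrier L"
      "l \<in> carrier K" "g \<in> carrier K \<rightarrow> carrier L" "m \<in> carrier K" "h \<in> carrier K \<rightarrow> carrier L"
      using that xy by (auto simp: wreath_carrier_iff)
    show ?thesis unfolding xy wreath_mult
      using c by (auto intro!: restrict_ext simp: L.m_assoc K.inv_mult K.m_ac Pi_def)
  qed
  show "\<one>\<^bsub>wreath L K\<^esub> \<otimes>\<^bsub>wreath L K\<^esub> x = x" if "x \<in> carrier (wreath L K)" for x
  proof -
    obtain f k where xy: "x = (f,k)" by fastforce
    have c: "k \<in> carrier K" "f \<in> carrier K \<rightarrow> carrier L" "f \<in> extensional (carrier K)"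
      using that xy by (auto simp: wreath_carrier_iff)
    show ?thesis unfolding xy wreath_mult wreath_one
      using c by (auto simp: Pi_def extensional_def intro!: ext)
  qed
  show "\<exists>y\<in>carrier (wreath L K). y \<otimes>\<^bsub>wreath L K\<^esub> x = \<one>\<^bsub>wreath L K\<^esub>" if "x \<in> carrier (wreath L K)" for x
  proof -
    obtain f k where xy: "x = (f,k)" by fastforce
    have c: "k \<in> carrier K" "f \<in> carrier K \<rightarrow> carrier L" "finite {v \<in> carrier K. f v \<noteq> \<one>\<^bsub>L\<^esub>}"
      using that xy by (auto simp: wreath_carrier_iff)
    define g where "g = (\<lambda>v\<in>carrier K. inv\<^bsub>L\<^esub> f (v \<otimes>\<^bsub>K\<^esub> k))"
    have "{v \<in> carrier K. g v \<noteq> \<one>\<^bsub>L\<^esub>} \<subseteq> (\<lambda>u. u \<otimes>\<^bsub>K\<^esub> inv\<^bsub>K\<^esub> k) ` {v \<in> carrier K. f v \<noteq> \<one>\<^bsub>L\<^esub>}"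
    proof
      fix v assume v: "v \<in> {v \<in> carrier K. g v \<noteq> \<one>\<^bsub>L\<^esub>}"
      then have "f (v \<otimes>\<^bsub>K\<^esub> k) \<noteq> \<one>\<^bsub>L\<^esub>" using c by (auto simp: g_def)
      moreover have "v = (v \<otimes>\<^bsub>K\<^esub> k) \<otimes>\<^bsub>K\<^esub> inv\<^bsub>K\<^esub> k" using v c by (simp add: K.m_assoc)
      ultimately show "v \<in> (\<lambda>u. u \<otimes>\<^bsub>K\<^esub> inv\<^bsub>K\<^esub> k) ` {v \<in> carrier K. f v \<noteq> \<one>\<^bsub>L\<^esub>}"
        using v c by blast
    qed
    then have fin: "finite {v \<in> carrier K. g v \<noteq> \<one>\<^bsub>L\<^esub>}" using c by (meson finite_imageI finite_subset)
    have "(g, inv\<^bsub>K\<^esub> k) \<in> carrier (wreath L K)"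
      using fin c by (auto simp: wreath_carrier_iff g_def Pi_def)
    moreover have "(g, inv\<^bsub>K\<^esub> k) \<otimes>\<^bsub>wreath L K\<^esub> x = \<one>\<^bsub>wreath L K\<^esub>"
      unfolding xy wreath_mult wreath_one using c
      by (auto simp: g_def Pi_def K.m_assoc intro!: restrict_ext)
    ultimately show ?thesis by blast
  qed
qed

lemma wreath_inv:
  assumes L: "group L" and K: "group K" and x: "(f,k) \<in> carrier (wreath L K)"
  shows "inv\<^bsub>wreath L K\<^esub> (f,k) = ((\<lambda>v\<in>carrier K. inv\<^bsub>L\<^esub> f (v \<otimes>\<^bsub>K\<^esub> k)), inv\<^bsub>K\<^esub> k)"
proof -
  interpret L: group L by (rule L)
  interpret K: group K by (rule K)
  have c: "k \<in> carrier K" "f \<in> carrier K \<rightarrow> carrier L" "finite {v \<in> carrier K. f v \<noteq> \<one>\<^bsub>L\<^esub>}"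
    "f \<in> extensional (carrier K)"
    using x by (auto simp: wreath_carrier_iff)
  define g where "g = (\<lambda>v\<in>carrier K. inv\<^bsub>L\<^esub> f (v \<otimes>\<^bsub>K\<^esub> k))"
  have "{v \<in> carrier K. g v \<noteq> \<one>\<^bsub>L\<^esub>} \<subseteq> (\<lambda>u. u \<otimes>\<^bsub>K\<^esub> inv\<^bsub>K\<^esub> k) ` {v \<in> carrier K. f v \<noteq> \<one>\<^bsub>L\<^esub>}"
  proof
    fix v assume v: "v \<in> {v \<in> carrier K. g v \<noteq> \<one>\<^bsub>L\<^esub>}"
    then have "f (v \<otimes>\<^bsub>K\<^esub> k) \<noteq> \<one>\<^bsub>L\<^esub>" using c by (auto simp: g_def)
    moreover have "v = (v \<otimes>\<^bsub>K\<^esub> k) \<otimes>\<^bsub>K\<^esub> inv\<^bsub>K\<^esub> k" using v c by (simp add: K.m_assoc)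
    ultimately show "v \<in> (\<lambda>u. u \<otimes>\<^bsub>K\<^esub> inv\<^bsub>K\<^esub> k) ` {v \<in> carrier K. f v \<noteq> \<one>\<^bsub>L\<^esub>}"
      using v c by blast
  qed
  then have fin: "finite {v \<in> carrier K. g v \<noteq> \<one>\<^bsub>L\<^esub>}" using c by (meson finite_imageI finite_subset)
  have yc: "(g, inv\<^bsub>K\<^esub> k) \<in> carrier (wreath L K)"
    using fin c by (auto simp: wreath_carrier_iff g_def Pi_def)
  have e1: "(g, inv\<^bsub>K\<^esub> k) \<otimes>\<^bsub>wreath L K\<^esub> (f,k) = \<one>\<^bsub>wreath L K\<^esub>"
    unfolding wreath_mult wreath_one using c
    by (auto simp: g_def Pi_def K.m_assoc intro!: restrict_ext)
  have e2: "(f,k) \<otimes>\<^bsub>wreath L K\<^esub> (g, inv\<^bsub>K\<^esub> k) = \<one>\<^bsub>wreath L K\<^esub>"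
    unfolding wreath_mult wreath_one using c
    by (auto simp: g_def Pi_def K.m_assoc intro!: restrict_ext)
  have uniq: "y = (g, inv\<^bsub>K\<^esub> k)" if y: "y \<in> carrier (wreath L K)" "y \<otimes>\<^bsub>wreath L K\<^esub> (f,k) = \<one>\<^bsub>wreath L K\<^esub>" for y
  proof -
    obtain h l where yy: "y = (h,l)" by fastforce
    have e1: "l \<otimes>\<^bsub>K\<^esub> k = \<one>\<^bsub>K\<^esub>" and e2: "\<And>v. v \<in> carrier K \<Longrightarrow> h v \<otimes>\<^bsub>L\<^esub> f (v \<otimes>\<^bsub>K\<^esub> inv\<^bsub>K\<^esub> l) = \<one>\<^bsub>L\<^esub>"
      using y(2) unfolding yy wreath_mult wreath_one by (auto dest: fun_cong[where x=v for v] split: if_splits)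
    have cy: "l \<in> carrier K" "h \<in> carrier K \<rightarrow> carrier L" "h \<in> extensional (carrier K)"
      using y yy by (auto simp: wreath_carrier_iff)
    have l: "l = inv\<^bsub>K\<^esub> k" using e1 c cy K.inv_equality by auto
    have "h = g"
    proof (rule extensionalityI[OF cy(3)])
      show "g \<in> extensional (carrier K)" by (simp add: g_def)
      fix v assume v: "v \<in> carrier K"
      have "h v \<otimes>\<^bsub>L\<^esub> f (v \<otimes>\<^bsub>K\<^esub> k) = \<one>\<^bsub>L\<^esub>" using e2[OF v] c l by simp
      then show "h v = g v"
        using v c cy L.inv_equality by (auto simp: Pi_def g_def)
    qed
    then show ?thesis using yy l by simp
  qed
  have "inv\<^bsub>wreath L K\<^esub> (f,k) = (g, inv\<^bsub>K\<^esub> k)"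
    unfolding m_inv_def[of "wreath L K"]
    apply (rule the_equality)
    using yc e1 e2 apply blast
    using uniq apply blast
    done
  then show ?thesis by (simp add: g_def)
qed

lemma wreath_inv_closed:
  assumes L: "group L" and K: "group K" and x: "x \<in> carrier (wreath L K)"
  shows "inv\<^bsub>wreath L K\<^esub> x \<in> carrier (wreath L K)"
proof -
  interpret L: group L by (rule L)
  interpret K: group K by (rule K)
  obtain f k where xy: "x = (f,k)" by fastforce
  have c: "k \<in> carrier K" "f \<in> carrier K \<rightarrow> carrier L" "finite {v \<in> carrier K. f v \<noteq> \<one>\<^bsub>L\<^esub>}"
    using x xy by (auto simp: wreath_carrier_iff)
  define g where "g = (\<lambda>v\<in>carrier K. inv\<^bsub>L\<^esub> f (v \<otimes>\<^bsub>K\<^esub> k))"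
  have "{v \<in> carrier K. g v \<noteq> \<one>\<^bsub>L\<^esub>} \<subseteq> (\<lambda>u. u \<otimes>\<^bsub>K\<^esub> inv\<^bsub>K\<^esub> k) ` {v \<in> carrier K. f v \<noteq> \<one>\<^bsub>L\<^esub>}"
  proof
    fix v assume v: "v \<in> {v \<in> carrier K. g v \<noteq> \<one>\<^bsub>L\<^esub>}"
    then have "f (v \<otimes>\<^bsub>K\<^esub> k) \<noteq> \<one>\<^bsub>L\<^esub>" using c by (auto simp: g_def)
    moreover have "v = (v \<otimes>\<^bsub>K\<^esub> k) \<otimes>\<^bsub>K\<^esub> inv\<^bsub>K\<^esub> k" using v c by (simp add: K.m_assoc)
    ultimately show "v \<in> (\<lambda>u. u \<otimes>\<^bsub>K\<^esub> inv\<^bsub>K\<^esub> k) ` {v \<in> carrier K. f v \<noteq> \<one>\<^bsub>L\<^esub>}"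
      using v c by blast
  qed
  then have fin: "finite {v \<in> carrier K. g v \<noteq> \<one>\<^bsub>L\<^esub>}" using c by (meson finite_imageI finite_subset)
  have yc: "(g, inv\<^bsub>K\<^esub> k) \<in> carrier (wreath L K)"
    using fin c by (auto simp: wreath_carrier_iff g_def Pi_def)
  have "inv\<^bsub>wreath L K\<^esub> (f,k) = (g, inv\<^bsub>K\<^esub> k)"
    unfolding g_def by (rule wreath_inv[OF L K x[unfolded xy]])
  then show ?thesis using yc xy by simp
qed

lemma wreath_r_one:
  assumes L: "group L" and K: "group K" and x: "x \<in> carrier (wreath L K)"
  shows "x \<otimes>\<^bsub>wreath L K\<^esub> \<one>\<^bsub>wreath L K\<^esub> = x"
proof -
  interpret L: group L by (rule L)
  interpret K: group K by (rule K)
  obtain f k where xy: "x = (f,k)" by fastforce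
  have c: "k \<in> carrier K" "f \<in> carrier K \<rightarrow> carrier L" "f \<in> extensional (carrier K)"
    using x xy by (auto simp: wreath_carrier_iff)
  show ?thesis unfolding xy wreath_mult wreath_one
    using c by (auto simp: Pi_def extensional_def intro!: ext)
qed



locale WR =
  fixes C :: "('c,'z) monoid_scheme" and s :: 'c
  assumes grpC: "group C" and sC: "s \<in> carrier C"
begin

abbreviation K where "K \<equiv> wreath C integer_group"
abbreviation G where "G \<equiv> wreath integer_group K"

lemma grpK: "group K"
  by (rule wreath_group[OF grpC abelian_integer_group])

sublocale C: group C by (rule grpC)
sublocale K: group K by (rule grpK)

lemma carrK: "(f,m) \<in> carrier K \<longleftrightarrow> f \<in> UNIV \<rightarrow> carrier C \<and> finite {v. f v \<noteq> \<one>\<^bsub>C\<^esub>}"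
  by (simp add: wreath_carrier_iff)

lemma multK: "(f,m) \<otimes>\<^bsub>K\<^esub> (g,l) = ((\<lambda>v. f v \<otimes>\<^bsub>C\<^esub> g (v - m)), m + l)"
  by (simp add: wreath_mult restrict_UNIV)

lemma oneK: "\<one>\<^bsub>K\<^esub> = ((\<lambda>v. \<one>\<^bsub>C\<^esub>), 0)"
  by (simp add: wreath_one restrict_UNIV)

lemma invK: "(f,m) \<in> carrier K \<Longrightarrow> inv\<^bsub>K\<^esub> (f,m) = ((\<lambda>v. inv\<^bsub>C\<^esub> (f (v + m))), -m)"
  using wreath_inv[OF grpC group_integer_group] by (simp add: restrict_UNIV)

lemma multG: "(F,k) \<otimes>\<^bsub>G\<^esub> (F',k') = ((\<lambda>v\<in>carrier K. F v + F' (v \<otimes>\<^bsub>K\<^esub> inv\<^bsub>K\<^esub> k)), k \<otimes>\<^bsub>K\<^esub> k')"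
  by (simp add: wreath_mult restrict_UNIV)

lemma oneG: "\<one>\<^bsub>G\<^esub> = ((\<lambda>v\<in>carrier K. 0), \<one>\<^bsub>K\<^esub>)"
  by (simp add: wreath_one restrict_UNIV)

lemma carrG: "(F,k) \<in> carrier G \<longleftrightarrow> k \<in> carrier K \<and> F \<in> extensional (carrier K) \<and> finite {v \<in> carrier K. F v \<noteq> 0}"
  by (simp add: wreath_carrier_iff)

lemma invG: "(F,k) \<in> carrier G \<Longrightarrow> inv\<^bsub>G\<^esub> (F,k) = ((\<lambda>v\<in>carrier K. - F (v \<otimes>\<^bsub>K\<^esub> k)), inv\<^bsub>K\<^esub> k)"
  using wreath_inv[OF group_integer_group grpK] by simp

lemma invG_closed: "x \<in> carrier G \<Longrightarrow> inv\<^bsub>G\<^esub> x \<in> carrier G"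
  by (rule wreath_inv_closed[OF group_integer_group grpK])

lemma multG_closed: "x \<in> carrier G \<Longrightarrow> y \<in> carrier G \<Longrightarrow> x \<otimes>\<^bsub>G\<^esub> y \<in> carrier G"
  by (rule wreath_m_closed[OF group_integer_group grpK])

fun rp where
  "rp [] = \<one>\<^bsub>K\<^esub>"
| "rp (g # xs) = rp xs \<otimes>\<^bsub>K\<^esub> snd g"

fun fp where
  "fp [] = \<one>\<^bsub>K\<^esub>"
| "fp (g # xs) = snd g \<otimes>\<^bsub>K\<^esub> fp xs"

fun wb where
  "wb [] v = 0"
| "wb (g # xs) v = fst g v + wb xs (v \<otimes>\<^bsub>K\<^esub> inv\<^bsub>K\<^esub> (snd g))"

lemma snd_carr: "g \<in> carrier G \<Longrightarrow> snd g \<in> carrier K"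
  by (cases g) (simp add: carrG)

lemma rp_carr: "set xs \<subseteq> carrier G \<Longrightarrow> rp xs \<in> carrier K"
  by (induction xs) (auto simp: snd_carr)

lemma fp_carr: "set xs \<subseteq> carrier G \<Longrightarrow> fp xs \<in> carrier K"
  by (induction xs) (auto simp: snd_carr)

lemma foldr_formula:
  assumes "set xs \<subseteq> carrier G" "(F,k) \<in> carrier G"
  shows "foldr (\<lambda>x y. x \<otimes>\<^bsub>G\<^esub> y) xs (F,k)
     = ((\<lambda>v\<in>carrier K. wb xs v + F (v \<otimes>\<^bsub>K\<^esub> inv\<^bsub>K\<^esub> (rp xs))), fp xs \<otimes>\<^bsub>K\<^esub> k)"
  using assms(1)
proof (induction xs)
  case Nil
  have F: "F \<in> extensional (carrier K)" "k \<in> carrier K" using assms(2) by (auto simp: carrG)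
  show ?case using F by (auto simp: extensional_def intro!: ext)
next
  case (Cons g xs)
  obtain f l where g: "g = (f,l)" by (metis surj_pair)
  have l: "l \<in> carrier K" using Cons.prems g by (auto simp: carrG)
  have r: "rp xs \<in> carrier K" "fp xs \<in> carrier K" using Cons.prems by (auto intro: rp_carr fp_carr)
  have k: "k \<in> carrier K" using assms(2) by (auto simp: carrG)
  show ?case unfolding g using Cons.IH Cons.prems l r k
    by (auto simp: multG g K.m_assoc K.inv_mult_group intro!: restrict_ext)
qed

lemma wp_formula:
  assumes "set xs \<subseteq> carrier G"
  shows "word_prod G xs = ((\<lambda>v\<in>carrier K. wb xs v), fp xs)"
proof -
  have "word_prod G xs = foldr (\<lambda>x y. x \<otimes>\<^bsub>G\<^esub> y) xs ((\<lambda>v\<in>carrier K. 0), \<one>\<^bsub>K\<^esub>)"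
    by (simp add: word_prod_def oneG)
  also have "\<dots> = ((\<lambda>v\<in>carrier K. wb xs v + (\<lambda>v\<in>carrier K. 0) (v \<otimes>\<^bsub>K\<^esub> inv\<^bsub>K\<^esub> (rp xs))), fp xs \<otimes>\<^bsub>K\<^esub> \<one>\<^bsub>K\<^esub>)"
    by (rule foldr_formula[OF assms]) (simp add: carrG)
  also have "\<dots> = ((\<lambda>v\<in>carrier K. wb xs v), fp xs)"
    using rp_carr[OF assms] fp_carr[OF assms] by (auto intro!: restrict_ext)
  finally show ?thesis .
qed

lemma rp_append: "rp (xs @ ys) = rp ys \<otimes>\<^bsub>K\<^esub> rp xs" if "set xs \<subseteq> carrier G" "set ys \<subseteq> carrier G"
  using that by (induction xs) (auto simp: K.m_assoc rp_carr snd_carr)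

lemma fp_append: "fp (xs @ ys) = fp xs \<otimes>\<^bsub>K\<^esub> fp ys" if "set xs \<subseteq> carrier G" "set ys \<subseteq> carrier G"
  using that by (induction xs) (auto simp: K.m_assoc fp_carr snd_carr)

lemma wb_append: "v \<in> carrier K \<Longrightarrow> set xs \<subseteq> carrier G \<Longrightarrow>
   wb (xs @ ys) v = wb xs v + wb ys (v \<otimes>\<^bsub>K\<^esub> inv\<^bsub>K\<^esub> (rp xs))"
proof (induction xs arbitrary: v)
  case (Cons g xs)
  have l: "snd g \<in> carrier K" using Cons.prems by (auto simp: snd_carr)
  have r: "rp xs \<in> carrier K" using Cons.prems by (auto intro: rp_carr)
  show ?case using Cons.IH[of "v \<otimes>\<^bsub>K\<^esub> inv\<^bsub>K\<^esub> snd g"] Cons.prems l r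
    by (simp add: K.m_assoc K.inv_mult_group)
qed simp


definition tp where "tp k = ((\<lambda>v\<in>carrier K. (0::int)), k)"

definition tpl where "tpl u \<longleftrightarrow> (\<forall>g\<in>set u. \<exists>k\<in>carrier K. g = tp k)"

lemma tp_carr: "k \<in> carrier K \<Longrightarrow> tp k \<in> carrier G"
  by (simp add: tp_def carrG)

lemma inv_tp: "k \<in> carrier K \<Longrightarrow> inv\<^bsub>G\<^esub> (tp k) = tp (inv\<^bsub>K\<^esub> k)"
  unfolding tp_def using tp_carr[of k] by (subst invG) (auto simp: tp_def intro!: restrict_ext)

lemma mult_tp: "k \<in> carrier K \<Longrightarrow> l \<in> carrier K \<Longrightarrow> tp k \<otimes>\<^bsub>G\<^esub> tp l = tp (k \<otimes>\<^bsub>K\<^esub> l)"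
  unfolding tp_def multG by (auto intro!: restrict_ext)

lemma tpl_carr: "tpl u \<Longrightarrow> set u \<subseteq> carrier G"
proof
  fix g assume "tpl u" "g \<in> set u"
  then obtain k where "k \<in> carrier K" "g = tp k" unfolding tpl_def by blast
  then show "g \<in> carrier G" using tp_carr by simp
qed

lemma tpl_append[simp]: "tpl (u @ w) \<longleftrightarrow> tpl u \<and> tpl w"
  unfolding tpl_def by auto

lemma tpl_Cons[simp]: "tpl (g # w) \<longleftrightarrow> (\<exists>k\<in>carrier K. g = tp k) \<and> tpl w"
  unfolding tpl_def by auto

lemma tpl_Nil[simp]: "tpl []"
  unfolding tpl_def by auto

lemma wb_tpl: "tpl u \<Longrightarrow> v \<in> carrier K \<Longrightarrow> wb u v = 0"
proof (induction u arbitrary: v)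
  case (Cons g u)
  then obtain k where k: "k \<in> carrier K" "g = tp k" by auto
  show ?case using Cons k by (simp add: tp_def)
qed simp

lemma tpl_rev_inv: "tpl u \<Longrightarrow> tpl (rev (map (m_inv G) u))"
  unfolding tpl_def set_rev set_map
proof
  fix g assume u: "\<forall>g\<in>set u. \<exists>k\<in>carrier K. g = tp k" and "g \<in> m_inv G ` set u"
  then obtain h where h: "h \<in> set u" "g = m_inv G h" by blast
  then obtain k where k: "k \<in> carrier K" "h = tp k" using u by blast
  then have "g = tp (inv\<^bsub>K\<^esub> k)" using h inv_tp by simp
  then show "\<exists>k\<in>carrier K. g = tp k" using k(1) K.inv_closed by blast
qed

lemma rp_rev_inv: "tpl u \<Longrightarrow> rp (rev (map (m_inv G) u)) = inv\<^bsub>K\<^esub> (rp u)"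
proof (induction u)
  case (Cons g u)
  then obtain k where k: "k \<in> carrier K" "g = tp k" by auto
  have tu: "tpl u" using Cons.prems by simp
  have c: "set (rev (map (m_inv G) u)) \<subseteq> carrier G"
    using tpl_carr[OF tpl_rev_inv[OF tu]] .
  have r: "rp u \<in> carrier K" using rp_carr[OF tpl_carr[OF tu]] .
  have e: "rev (map (m_inv G) (g # u)) = rev (map (m_inv G) u) @ [tp (inv\<^bsub>K\<^esub> k)]"
    using k inv_tp by simp
  have "rp (rev (map (m_inv G) (g # u))) = rp [tp (inv\<^bsub>K\<^esub> k)] \<otimes>\<^bsub>K\<^esub> rp (rev (map (m_inv G) u))"
    unfolding e by (rule rp_append[OF c]) (use tp_carr k in auto)
  also have "\<dots> = inv\<^bsub>K\<^esub> k \<otimes>\<^bsub>K\<^esub> inv\<^bsub>K\<^esub> (rp u)"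
    using Cons.IH[OF tu] k by (simp add: tp_def)
  also have "\<dots> = inv\<^bsub>K\<^esub> (rp (g # u))"
    using k r by (simp add: K.inv_mult_group tp_def)
  finally show ?case .
qed simp

lemma fp_rev_inv: "tpl u \<Longrightarrow> fp (rev (map (m_inv G) u)) = inv\<^bsub>K\<^esub> (fp u)"
proof (induction u)
  case (Cons g u)
  then obtain k where k: "k \<in> carrier K" "g = tp k" by auto
  have tu: "tpl u" using Cons.prems by simp
  have c: "set (rev (map (m_inv G) u)) \<subseteq> carrier G"
    using tpl_carr[OF tpl_rev_inv[OF tu]] .
  have r: "fp u \<in> carrier K" using fp_carr[OF tpl_carr[OF tu]] .
  have e: "rev (map (m_inv G) (g # u)) = rev (map (m_inv G) u) @ [tp (inv\<^bsub>K\<^esub> k)]"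
    using k inv_tp by simp
  have "fp (rev (map (m_inv G) (g # u))) = fp (rev (map (m_inv G) u)) \<otimes>\<^bsub>K\<^esub> fp [tp (inv\<^bsub>K\<^esub> k)]"
    unfolding e by (rule fp_append[OF c]) (use tp_carr k in auto)
  also have "\<dots> = inv\<^bsub>K\<^esub> (fp u) \<otimes>\<^bsub>K\<^esub> inv\<^bsub>K\<^esub> k"
    using Cons.IH[OF tu] k by (simp add: tp_def)
  also have "\<dots> = inv\<^bsub>K\<^esub> (fp (g # u))"
    using k r by (simp add: K.inv_mult_group tp_def)
  finally show ?case .
qed simp

definition blk where "blk u mid = u @ mid @ rev (map (m_inv G) u)"

lemma blk_carr: "tpl u \<Longrightarrow> set mid \<subseteq> carrier G \<Longrightarrow> set (blk u mid) \<subseteq> carrier G"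
  unfolding blk_def using tpl_carr[of u] invG_closed by auto

lemma blk_props:
  assumes u: "tpl u" and mid: "set mid \<subseteq> carrier G" "rp mid = \<one>\<^bsub>K\<^esub>" "fp mid = \<one>\<^bsub>K\<^esub>"
  shows "rp (blk u mid) = \<one>\<^bsub>K\<^esub>" "fp (blk u mid) = \<one>\<^bsub>K\<^esub>"
    "v \<in> carrier K \<Longrightarrow> wb (blk u mid) v = wb mid (v \<otimes>\<^bsub>K\<^esub> inv\<^bsub>K\<^esub> (rp u))"
proof -
  have cu: "set u \<subseteq> carrier G" by (rule tpl_carr[OF u])
  have ci: "set (rev (map (m_inv G) u)) \<subseteq> carrier G" using cu invG_closed by auto
  have r: "rp u \<in> carrier K" "fp u \<in> carrier K" using cu by (auto intro: rp_carr fp_carr)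
  show "rp (blk u mid) = \<one>\<^bsub>K\<^esub>" unfolding blk_def
    using cu ci mid r by (simp add: rp_append rp_rev_inv[OF u])
  show "fp (blk u mid) = \<one>\<^bsub>K\<^esub>" unfolding blk_def
    using cu ci mid r by (simp add: fp_append fp_rev_inv[OF u])
  assume v: "v \<in> carrier K"
  have w: "v \<otimes>\<^bsub>K\<^esub> inv\<^bsub>K\<^esub> (rp u) \<in> carrier K" using v r by simp
  have tu: "tpl (rev (map (m_inv G) u))" by (rule tpl_rev_inv[OF u])
  have e1: "wb (u @ (mid @ rev (map (m_inv G) u))) v = wb u v + wb (mid @ rev (map (m_inv G) u)) (v \<otimes>\<^bsub>K\<^esub> inv\<^bsub>K\<^esub> (rp u))"
    by (rule wb_append[OF v cu])
  have e2: "wb (mid @ rev (map (m_inv G) u)) (v \<otimes>\<^bsub>K\<^esub> inv\<^bsub>K\<^esub> (rp u)) = wb mid (v \<otimes>\<^bsub>K\<^esub> inv\<^bsub>K\<^esub> (rp u)) + wb (rev (map (m_inv G) u)) ((v \<otimes>\<^bsub>K\<^esub> inv\<^bsub>K\<^esub> (rp u)) \<otimes>\<^bsub>K\<^esub> inv\<^bsub>K\<^esub> (rp mid))"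
    by (rule wb_append[OF w mid(1)])
  have e3: "wb u v = 0" by (rule wb_tpl[OF u v])
  have e4: "wb (rev (map (m_inv G) u)) ((v \<otimes>\<^bsub>K\<^esub> inv\<^bsub>K\<^esub> (rp u)) \<otimes>\<^bsub>K\<^esub> inv\<^bsub>K\<^esub> (rp mid)) = 0"
    by (rule wb_tpl[OF tu]) (use w mid(2) in simp)
  show "wb (blk u mid) v = wb mid (v \<otimes>\<^bsub>K\<^esub> inv\<^bsub>K\<^esub> (rp u))" unfolding blk_def
    using e1 e2 e3 e4 by simp
qed

lemma wb_append_neutral: "v \<in> carrier K \<Longrightarrow> set xs \<subseteq> carrier G \<Longrightarrow> rp xs = \<one>\<^bsub>K\<^esub> \<Longrightarrow>
   wb (xs @ ys) v = wb xs v + wb ys v"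
  using wb_append by simp

lemma inv_eq_one_iff: "v \<in> carrier K \<Longrightarrow> p \<in> carrier K \<Longrightarrow> (v \<otimes>\<^bsub>K\<^esub> inv\<^bsub>K\<^esub> p = \<one>\<^bsub>K\<^esub>) \<longleftrightarrow> v = p"
  by (metis K.inv_closed K.inv_equality K.inv_inv K.r_inv)

lemma inv_eq_z_iff: "v \<in> carrier K \<Longrightarrow> p \<in> carrier K \<Longrightarrow> z \<in> carrier K \<Longrightarrow>
   (v \<otimes>\<^bsub>K\<^esub> inv\<^bsub>K\<^esub> p = z) \<longleftrightarrow> v = z \<otimes>\<^bsub>K\<^esub> p"
  by (metis K.inv_closed K.inv_solve_right)

end


context WR
begin

abbreviation sK where "sK \<equiv> wr_base C integer_group s"
abbreviation tK where "tK \<equiv> wr_top C integer_group (1::int)"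

lemma sK_eq: "sK = ((\<lambda>v. if v = 0 then s else \<one>\<^bsub>C\<^esub>), 0)"
  by (simp add: wr_base_def restrict_UNIV)

lemma tK_eq: "tK = ((\<lambda>v. \<one>\<^bsub>C\<^esub>), 1)"
  by (simp add: wr_top_def restrict_UNIV)

lemma sK_carr: "sK \<in> carrier K"
proof -
  have "{v. (if v = (0::int) then s else \<one>\<^bsub>C\<^esub>) \<noteq> \<one>\<^bsub>C\<^esub>} \<subseteq> {0}" by auto
  then show ?thesis unfolding sK_eq carrK using sC by (auto intro: finite_subset)
qed

lemma tK_carr: "tK \<in> carrier K"
  unfolding tK_eq carrK by simp

definition xi where "xi = ((\<lambda>v. if v = 0 then inv\<^bsub>C\<^esub> s else \<one>\<^bsub>C\<^esub>), -1::int)"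
definition yi where "yi = ((\<lambda>v. \<one>\<^bsub>C\<^esub>), -1::int)"

lemma xK_eq: "tK \<otimes>\<^bsub>K\<^esub> sK = ((\<lambda>v. if v = 1 then s else \<one>\<^bsub>C\<^esub>), 1)"
  unfolding tK_eq sK_eq multK using sC by (auto intro!: ext)

lemma xK_carr: "tK \<otimes>\<^bsub>K\<^esub> sK \<in> carrier K"
  using tK_carr sK_carr by simp

lemma xi_eq: "inv\<^bsub>K\<^esub> (tK \<otimes>\<^bsub>K\<^esub> sK) = xi"
  using xK_carr unfolding xK_eq xi_def by (subst invK) (auto intro!: ext)

lemma yi_eq: "inv\<^bsub>K\<^esub> tK = yi"
  using tK_carr unfolding tK_eq yi_def by (subst invK) (auto intro!: ext)

lemma xi_carr: "xi \<in> carrier K" using xi_eq xK_carr by (metis K.inv_closed)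
lemma yi_carr: "yi \<in> carrier K" using yi_eq tK_carr by (metis K.inv_closed)

lemma sp0_eq: "inv\<^bsub>K\<^esub> sK \<otimes>\<^bsub>K\<^esub> yi = xi"
  using sK_carr tK_carr by (simp add: xi_eq[symmetric] yi_eq[symmetric] K.inv_mult_group)

fun pp where
  "pp 0 = xi"
| "pp (Suc n) = yi \<otimes>\<^bsub>K\<^esub> pp n"

fun qq where
  "qq 0 = yi"
| "qq (Suc n) = yi \<otimes>\<^bsub>K\<^esub> qq n"

lemma pp_eq: "pp n = ((\<lambda>v. if v = - int n then inv\<^bsub>C\<^esub> s else \<one>\<^bsub>C\<^esub>), - int n - 1)"
proof (induction n)
  case 0 show ?case by (simp add: xi_def)
next
  case (Suc n)
  show ?case using sC by (simp add: Suc yi_def multK) (auto intro!: ext)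
qed

lemma qq_eq: "qq n = ((\<lambda>v. \<one>\<^bsub>C\<^esub>), - int n - 1)"
proof (induction n)
  case 0 show ?case by (simp add: yi_def)
next
  case (Suc n)
  show ?case by (simp add: Suc yi_def multK)
qed

lemma pp_carr: "pp n \<in> carrier K"
  by (induction n) (auto simp: xi_carr yi_carr)

lemma qq_carr: "qq n \<in> carrier K"
  by (induction n) (auto simp: yi_carr)

definition cf :: "(int \<Rightarrow> 'c) \<times> int \<Rightarrow> int" where
  "cf k = (if snd k \<le> -1 \<and> fst k (snd k + 1) = inv\<^bsub>C\<^esub> s then 2 ^ nat (- snd k) else 0)"

lemma cf_pp: "cf (pp n) = 2 ^ (n + 1)"
proof -
  have "nat (int n + 1) = n + 1" "nat (1 + int n) = Suc n" by simp_all
  then show ?thesis by (simp add: cf_def pp_eq)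
qed

lemma cf_qq: assumes "s \<noteq> \<one>\<^bsub>C\<^esub>" shows "cf (qq n) = 0"
proof -
  have "\<one>\<^bsub>C\<^esub> \<noteq> inv\<^bsub>C\<^esub> s" using assms sC C.inv_eq_1_iff by metis
  then show ?thesis by (simp add: cf_def qq_eq)
qed

lemma cf_bound:
  assumes k: "k \<in> carrier K" and z: "z = ((\<lambda>v. if v = 0 then c else \<one>\<^bsub>C\<^esub>), -1)" and c: "c \<in> carrier C"
  shows "\<bar>2 * cf k - cf (z \<otimes>\<^bsub>K\<^esub> k)\<bar> \<le> 2"
proof -
  obtain f m where km: "k = (f,m)" by (metis surj_pair)
  have f: "\<And>v. f v \<in> carrier C" using k km by (auto simp: carrK)
  have zk: "z \<otimes>\<^bsub>K\<^esub> k = ((\<lambda>v. (if v = 0 then c else \<one>\<^bsub>C\<^esub>) \<otimes>\<^bsub>C\<^esub> f (v + 1)), m - 1)"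
    unfolding z km multK by simp
  consider "m \<le> -1" | "m = 0" | "m \<ge> 1" by linarith
  then show ?thesis
  proof cases
    case 1
    have e: "(if m = 0 then c else \<one>\<^bsub>C\<^esub>) \<otimes>\<^bsub>C\<^esub> f (m + 1) = f (m + 1)" using 1 f by simp
    have n: "nat (- (m - 1)) = Suc (nat (- m))" "nat (1 - m) = Suc (nat (- m))" using 1 by simp_all
    have fm: "f (m + 1) \<in> carrier C" by (rule f)
    show ?thesis using 1 fm sC unfolding zk cf_def by (simp add: km e n)
  next
    case 2
    show ?thesis unfolding zk cf_def using 2 by (simp add: km)
  next
    case 3
    show ?thesis unfolding zk cf_def using 3 by (simp add: km)
  qed
qed

lemma cf_bound_xi: "k \<in> carrier K \<Longrightarrow> \<bar>2 * cf k - cf (xi \<otimes>\<^bsub>K\<^esub> k)\<bar> \<le> 2"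
  by (rule cf_bound[of _ _ "inv\<^bsub>C\<^esub> s"]) (auto simp: xi_def sC)

lemma cf_bound_yi: "k \<in> carrier K \<Longrightarrow> \<bar>2 * cf k - cf (yi \<otimes>\<^bsub>K\<^esub> k)\<bar> \<le> 2"
  by (rule cf_bound[of _ _ "\<one>\<^bsub>C\<^esub>"]) (auto simp: yi_def intro!: ext)

end


context WR
begin

abbreviation aG where "aG \<equiv> wr_base integer_group K (1::int)"
abbreviation sG where "sG \<equiv> wr_top integer_group K sK"
abbreviation tG where "tG \<equiv> wr_top integer_group K tK"

lemma aG_eq: "aG = ((\<lambda>v\<in>carrier K. if v = \<one>\<^bsub>K\<^esub> then 1 else 0), \<one>\<^bsub>K\<^esub>)"
  unfolding wr_base_def by (simp add: restrict_def fun_eq_iff)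

lemma sG_eq: "sG = tp sK" by (simp add: wr_top_def tp_def)
lemma tG_eq: "tG = tp tK" by (simp add: wr_top_def tp_def)

lemma aG_carr: "aG \<in> carrier G"
proof -
  have "{v \<in> carrier K. (\<lambda>v\<in>carrier K. if v = \<one>\<^bsub>K\<^esub> then 1 else (0::int)) v \<noteq> 0} \<subseteq> {\<one>\<^bsub>K\<^esub>}" by auto
  then show ?thesis unfolding aG_eq carrG by (auto intro: finite_subset)
qed

lemma multG1: "k' \<in> carrier K \<Longrightarrow> (F, \<one>\<^bsub>K\<^esub>) \<otimes>\<^bsub>G\<^esub> (F', k') = ((\<lambda>v\<in>carrier K. F v + F' v), k')"
  unfolding multG by (auto intro!: restrict_ext)

lemma inv_aG: "inv\<^bsub>G\<^esub> aG = ((\<lambda>v\<in>carrier K. if v = \<one>\<^bsub>K\<^esub> then -1 else 0), \<one>\<^bsub>K\<^esub>)"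
  using aG_carr unfolding aG_eq by (subst invG) (auto intro!: restrict_ext)

definition bl where "bl z = ((\<lambda>v\<in>carrier K. (if v = \<one>\<^bsub>K\<^esub> then 2 else 0) - (if v = z then 1 else (0::int))), \<one>\<^bsub>K\<^esub>)"
definition nbl where "nbl z = ((\<lambda>v\<in>carrier K. (if v = z then 1 else 0) - (if v = \<one>\<^bsub>K\<^esub> then 2 else (0::int))), \<one>\<^bsub>K\<^esub>)"

lemma bl_carr: "bl z \<in> carrier G"
proof -
  have "{v \<in> carrier K. fst (bl z) v \<noteq> 0} \<subseteq> {\<one>\<^bsub>K\<^esub>, z}" by (auto simp: bl_def)
  then show ?thesis unfolding bl_def carrG by (auto intro: finite_subset)
qed

lemma nbl_carr: "nbl z \<in> carrier G"
proof -
  have "{v \<in> carrier K. fst (nbl z) v \<noteq> 0} \<subseteq> {\<one>\<^bsub>K\<^esub>, z}" by (auto simp: nbl_def)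
  then show ?thesis unfolding nbl_def carrG by (auto intro: finite_subset)
qed

lemma inv_bl: "inv\<^bsub>G\<^esub> (bl z) = nbl z"
  using bl_carr[of z] unfolding bl_def nbl_def by (subst invG) (auto intro!: restrict_ext)

lemma comm_B:
  assumes k: "k \<in> carrier K"
  shows "commutator G (tp k) aG \<otimes>\<^bsub>G\<^esub> aG = bl (inv\<^bsub>K\<^esub> k)"
proof -
  have s1: "tp (inv\<^bsub>K\<^esub> k) \<otimes>\<^bsub>G\<^esub> inv\<^bsub>G\<^esub> aG = ((\<lambda>v\<in>carrier K. if v = inv\<^bsub>K\<^esub> k then -1 else 0), inv\<^bsub>K\<^esub> k)"
  proof -
    have hv: "\<forall>v\<in>carrier K. (v \<otimes>\<^bsub>K\<^esub> inv\<^bsub>K\<^esub> (inv\<^bsub>K\<^esub> k) = \<one>\<^bsub>K\<^esub>) \<longleftrightarrow> v = inv\<^bsub>K\<^esub> k"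
      using inv_eq_one_iff[OF _ K.inv_closed[OF k]] by blast
    show ?thesis unfolding inv_aG tp_def multG using k hv by (auto intro!: restrict_ext)
  qed
  have s2: "((\<lambda>v\<in>carrier K. if v = inv\<^bsub>K\<^esub> k then -1 else (0::int)), inv\<^bsub>K\<^esub> k) \<otimes>\<^bsub>G\<^esub> tp k
      = ((\<lambda>v\<in>carrier K. if v = inv\<^bsub>K\<^esub> k then -1 else 0), \<one>\<^bsub>K\<^esub>)"
    unfolding tp_def multG using k by (auto intro!: restrict_ext)
  show ?thesis
    unfolding commutator_def inv_tp[OF k] s1 s2 unfolding aG_eq multG1[OF K.one_closed] bl_def
    by (auto intro!: restrict_ext)
qed

definition Tset where "Tset = {tp (tK \<otimes>\<^bsub>K\<^esub> sK), tp tK, bl xi, bl yi}"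
definition Sset where "Sset = {aG, sG, tG}"

lemma T_eq: "{tG \<otimes>\<^bsub>G\<^esub> sG, tG, commutator G (tG \<otimes>\<^bsub>G\<^esub> sG) aG \<otimes>\<^bsub>G\<^esub> aG, commutator G tG aG \<otimes>\<^bsub>G\<^esub> aG} = Tset"
proof -
  have x: "tG \<otimes>\<^bsub>G\<^esub> sG = tp (tK \<otimes>\<^bsub>K\<^esub> sK)" unfolding sG_eq tG_eq using tK_carr sK_carr by (simp add: mult_tp)
  show ?thesis unfolding Tset_def x unfolding tG_eq
    using comm_B[OF xK_carr] comm_B[OF tK_carr] xi_eq yi_eq by simp
qed

lemma Tset_carr: "Tset \<subseteq> carrier G"
  unfolding Tset_def using tp_carr xK_carr tK_carr bl_carr by auto

lemma Sset_carr: "Sset \<subseteq> carrier G"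
  unfolding Sset_def sG_eq tG_eq using tp_carr sK_carr tK_carr aG_carr by auto

fun up where
  "up 0 = [tp xi]"
| "up (Suc n) = up n @ [tp yi]"

fun uq where
  "uq 0 = [tp yi]"
| "uq (Suc n) = uq n @ [tp yi]"

fun sp where
  "sp 0 = [tp yi, tp (inv\<^bsub>K\<^esub> sK)]"
| "sp (Suc n) = sp n @ [tp yi]"

lemma up_props: "tpl (up n) \<and> rp (up n) = pp n \<and> set (up n) \<subseteq> {tp xi, tp yi} \<and> length (up n) = n + 1"
proof (induction n)
  case 0 show ?case using xi_carr by (auto simp: tp_def)
next
  case (Suc n)
  then have "rp (up (Suc n)) = rp [tp yi] \<otimes>\<^bsub>K\<^esub> rp (up n)"
    using rp_append[of "up n" "[tp yi]"] tpl_carr tp_carr yi_carr by auto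
  then show ?case using Suc yi_carr pp_carr by (auto simp: tp_def)
qed

lemma uq_props: "tpl (uq n) \<and> rp (uq n) = qq n \<and> set (uq n) \<subseteq> {tp yi} \<and> length (uq n) = n + 1"
proof (induction n)
  case 0 show ?case using yi_carr by (auto simp: tp_def)
next
  case (Suc n)
  then have "rp (uq (Suc n)) = rp [tp yi] \<otimes>\<^bsub>K\<^esub> rp (uq n)"
    using rp_append[of "uq n" "[tp yi]"] tpl_carr tp_carr yi_carr by auto
  then show ?case using Suc yi_carr qq_carr by (auto simp: tp_def)
qed

lemma sp_props: "tpl (sp n) \<and> rp (sp n) = pp n \<and> set (sp n) \<subseteq> {tp yi, tp (inv\<^bsub>K\<^esub> sK)} \<and> length (sp n) = n + 2"
proof (induction n)
  case 0
  have "rp (sp 0) = inv\<^bsub>K\<^esub> sK \<otimes>\<^bsub>K\<^esub> yi" using sK_carr yi_carr by (simp add: tp_def)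
  then show ?case using yi_carr sK_carr sp0_eq by (auto simp: tp_def)
next
  case (Suc n)
  then have "rp (sp (Suc n)) = rp [tp yi] \<otimes>\<^bsub>K\<^esub> rp (sp n)"
    using rp_append[of "sp n" "[tp yi]"] tpl_carr tp_carr yi_carr by auto
  then show ?case using Suc yi_carr pp_carr by (auto simp: tp_def)
qed

end


context WR
begin

definition dd where "dd n v = (if v = pp n then 1 else 0) - (if v = qq n then 1 else (0::int))"

fun W where
  "W 0 = [nbl xi, bl yi]"
| "W (Suc n) = W n @ W n @ blk (up n) [nbl yi] @ blk (uq n) [bl yi]"

definition SW where "SW n = blk (sp n) [aG] @ blk (uq n) [inv\<^bsub>G\<^esub> aG]"

lemma single_props:
  assumes "g \<in> carrier G" "snd g = \<one>\<^bsub>K\<^esub>"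
  shows "set [g] \<subseteq> carrier G" "rp [g] = \<one>\<^bsub>K\<^esub>" "fp [g] = \<one>\<^bsub>K\<^esub>" "\<And>v. wb [g] v = fst g v"
  using assms by auto

lemma blk1:
  assumes u: "tpl u" and g: "g \<in> carrier G" "snd g = \<one>\<^bsub>K\<^esub>"
  shows "set (blk u [g]) \<subseteq> carrier G" "rp (blk u [g]) = \<one>\<^bsub>K\<^esub>" "fp (blk u [g]) = \<one>\<^bsub>K\<^esub>"
    "v \<in> carrier K \<Longrightarrow> wb (blk u [g]) v = fst g (v \<otimes>\<^bsub>K\<^esub> inv\<^bsub>K\<^esub> (rp u))"
  using blk_carr[OF u single_props(1)[OF g]] blk_props[OF u single_props(1-3)[OF g]]
    single_props(4)[OF g] by auto

lemma nbl_at: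
  assumes z: "z \<in> carrier K" and p: "p \<in> carrier K" and v: "v \<in> carrier K"
  shows "fst (nbl z) (v \<otimes>\<^bsub>K\<^esub> inv\<^bsub>K\<^esub> p) = (if v = z \<otimes>\<^bsub>K\<^esub> p then 1 else 0) - (if v = p then 2 else 0)"
  using inv_eq_one_iff[OF v p] inv_eq_z_iff[OF v p z] v p by (simp add: nbl_def)

lemma bl_at:
  assumes z: "z \<in> carrier K" and p: "p \<in> carrier K" and v: "v \<in> carrier K"
  shows "fst (bl z) (v \<otimes>\<^bsub>K\<^esub> inv\<^bsub>K\<^esub> p) = (if v = p then 2 else 0) - (if v = z \<otimes>\<^bsub>K\<^esub> p then 1 else 0)"
  using inv_eq_one_iff[OF v p] inv_eq_z_iff[OF v p z] v p by (simp add: bl_def)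

lemma W_props: "set (W n) \<subseteq> carrier G \<and> rp (W n) = \<one>\<^bsub>K\<^esub> \<and> fp (W n) = \<one>\<^bsub>K\<^esub> \<and> (\<forall>v\<in>carrier K. wb (W n) v = dd n v)"
proof (induction n)
  case 0
  show ?case using nbl_carr bl_carr by (auto simp: nbl_def bl_def dd_def)
next
  case (Suc n)
  have IH: "set (W n) \<subseteq> carrier G" "rp (W n) = \<one>\<^bsub>K\<^esub>" "fp (W n) = \<one>\<^bsub>K\<^esub>" "\<And>v. v \<in> carrier K \<Longrightarrow> wb (W n) v = dd n v"
    using Suc by auto
  have u1: "tpl (up n)" "rp (up n) = pp n" using up_props by auto
  have u2: "tpl (uq n)" "rp (uq n) = qq n" using uq_props by auto
  have g1: "nbl yi \<in> carrier G" "snd (nbl yi) = \<one>\<^bsub>K\<^esub>" using nbl_carr by (auto simp: nbl_def)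
  have g2: "bl yi \<in> carrier G" "snd (bl yi) = \<one>\<^bsub>K\<^esub>" using bl_carr by (auto simp: bl_def)
  note B1 = blk1[OF u1(1) g1] and B2 = blk1[OF u2(1) g2]
  have c12: "set (blk (up n) [nbl yi] @ blk (uq n) [bl yi]) \<subseteq> carrier G" using B1 B2 by auto
  have c2: "set (W n @ blk (up n) [nbl yi] @ blk (uq n) [bl yi]) \<subseteq> carrier G" using IH B1 B2 by auto
  have rp12: "rp (blk (up n) [nbl yi] @ blk (uq n) [bl yi]) = \<one>\<^bsub>K\<^esub>"
    using rp_append[OF B1(1) B2(1)] B1 B2 by simp
  have fp12: "fp (blk (up n) [nbl yi] @ blk (uq n) [bl yi]) = \<one>\<^bsub>K\<^esub>"
    using fp_append[OF B1(1) B2(1)] B1 B2 by simp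
  have rp2: "rp (W n @ blk (up n) [nbl yi] @ blk (uq n) [bl yi]) = \<one>\<^bsub>K\<^esub>"
    using rp_append[OF IH(1) c12] rp12 IH by simp
  have fp2: "fp (W n @ blk (up n) [nbl yi] @ blk (uq n) [bl yi]) = \<one>\<^bsub>K\<^esub>"
    using fp_append[OF IH(1) c12] fp12 IH by simp
  have rpW: "rp (W (Suc n)) = \<one>\<^bsub>K\<^esub>"
    using rp_append[OF IH(1) c2] rp2 IH by simp
  have fpW: "fp (W (Suc n)) = \<one>\<^bsub>K\<^esub>"
    using fp_append[OF IH(1) c2] fp2 IH by simp
  have wbW: "wb (W (Suc n)) v = dd (Suc n) v" if v: "v \<in> carrier K" for v
  proof -
    have "wb (W (Suc n)) v = wb (W n) v + (wb (W n) v + (wb (blk (up n) [nbl yi]) v + wb (blk (uq n) [bl yi]) v))"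
      using wb_append_neutral[OF v IH(1) IH(2)] wb_append_neutral[OF v B1(1) B1(2)] by simp
    also have "\<dots> = dd n v + (dd n v + (fst (nbl yi) (v \<otimes>\<^bsub>K\<^esub> inv\<^bsub>K\<^esub> pp n) + fst (bl yi) (v \<otimes>\<^bsub>K\<^esub> inv\<^bsub>K\<^esub> qq n)))"
      using IH(4)[OF v] B1(4)[OF v] B2(4)[OF v] u1 u2 by simp
    also have "\<dots> = dd (Suc n) v"
      using nbl_at[OF yi_carr pp_carr v, of n] bl_at[OF yi_carr qq_carr v, of n]
      by (simp add: dd_def)
    finally show ?thesis .
  qed
  show ?case using IH(1) B1 B2 rpW fpW wbW by auto
qed

lemma SW_props: "set (SW n) \<subseteq> carrier G \<and> fp (SW n) = \<one>\<^bsub>K\<^esub> \<and> (\<forall>v\<in>carrier K. wb (SW n) v = dd n v)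
   \<and> length (SW n) = 4 * n + 8"
proof -
  have u1: "tpl (sp n)" "rp (sp n) = pp n" "length (sp n) = n + 2" using sp_props by auto
  have u2: "tpl (uq n)" "rp (uq n) = qq n" "length (uq n) = n + 1" using uq_props by auto
  have ia: "inv\<^bsub>G\<^esub> aG \<in> carrier G" using invG_closed aG_carr by blast
  have g1: "aG \<in> carrier G" "snd aG = \<one>\<^bsub>K\<^esub>" using aG_carr by (auto simp: aG_eq)
  have g2: "inv\<^bsub>G\<^esub> aG \<in> carrier G" "snd (inv\<^bsub>G\<^esub> aG) = \<one>\<^bsub>K\<^esub>" using ia by (auto simp: inv_aG)
  note B1 = blk1[OF u1(1) g1] and B2 = blk1[OF u2(1) g2]
  have fp: "fp (SW n) = \<one>\<^bsub>K\<^esub>" unfolding SW_def using fp_append[OF B1(1) B2(1)] B1 B2 by simp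
  have wb: "wb (SW n) v = dd n v" if v: "v \<in> carrier K" for v
  proof -
    have "wb (SW n) v = wb (blk (sp n) [aG]) v + wb (blk (uq n) [inv\<^bsub>G\<^esub> aG]) v"
      unfolding SW_def by (rule wb_append_neutral[OF v B1(1) B1(2)])
    also have "\<dots> = fst aG (v \<otimes>\<^bsub>K\<^esub> inv\<^bsub>K\<^esub> pp n) + fst (inv\<^bsub>G\<^esub> aG) (v \<otimes>\<^bsub>K\<^esub> inv\<^bsub>K\<^esub> qq n)"
      using B1(4)[OF v] B2(4)[OF v] u1 u2 by simp
    also have "\<dots> = dd n v"
      using inv_eq_one_iff[OF v pp_carr, of n] inv_eq_one_iff[OF v qq_carr, of n] v pp_carr[of n] qq_carr[of n]
      unfolding inv_aG by (simp add: aG_eq dd_def)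
    finally show ?thesis .
  qed
  have len: "length (SW n) = 4 * n + 8" unfolding SW_def blk_def by (simp add: u1(3) u2(3))
  show ?thesis using B1 B2 fp wb len unfolding SW_def by auto
qed

definition En where "En n = ((\<lambda>v\<in>carrier K. dd n v), \<one>\<^bsub>K\<^esub>)"

lemma wp_W: "word_prod G (W n) = En n"
  using wp_formula[of "W n"] W_props[of n] unfolding En_def by (auto intro!: restrict_ext)

lemma wp_SW: "word_prod G (SW n) = En n"
  using wp_formula[of "SW n"] SW_props[of n] unfolding En_def by (auto intro!: restrict_ext)

end


context WR
begin

definition Tall where "Tall = {tp (tK \<otimes>\<^bsub>K\<^esub> sK), tp tK, bl xi, bl yi, tp xi, tp yi, nbl xi, nbl yi}"
definition Sall where "Sall = {aG, tp sK, tp tK, inv\<^bsub>G\<^esub> aG, tp (inv\<^bsub>K\<^esub> sK), tp yi}"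

lemma inv_tp_xK: "inv\<^bsub>G\<^esub> (tp (tK \<otimes>\<^bsub>K\<^esub> sK)) = tp xi"
  using inv_tp[OF xK_carr] xi_eq by simp
lemma inv_tp_tK: "inv\<^bsub>G\<^esub> (tp tK) = tp yi"
  using inv_tp[OF tK_carr] yi_eq by simp
lemma inv_tp_xi: "inv\<^bsub>G\<^esub> (tp xi) = tp (tK \<otimes>\<^bsub>K\<^esub> sK)"
  using inv_tp[OF xi_carr] xi_eq[symmetric] xK_carr by simp
lemma inv_tp_yi: "inv\<^bsub>G\<^esub> (tp yi) = tp tK"
  using inv_tp[OF yi_carr] yi_eq[symmetric] tK_carr by simp
lemma inv_tp_isK: "inv\<^bsub>G\<^esub> (tp (inv\<^bsub>K\<^esub> sK)) = tp sK"
  using inv_tp[OF K.inv_closed[OF sK_carr]] sK_carr by simp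

lemma T_all: "Tset \<union> m_inv G ` Tset = Tall"
  unfolding Tset_def Tall_def using inv_tp_xK inv_tp_tK inv_bl by auto

lemma S_all: "Sset \<union> m_inv G ` Sset = Sall"
  unfolding Sset_def Sall_def sG_eq tG_eq using inv_tp[OF sK_carr] inv_tp_tK by auto

lemma set_blk: "set (blk u mid) = set u \<union> set mid \<union> m_inv G ` set u"
  unfolding blk_def by auto

lemma W_letters: "set (W n) \<subseteq> Tall"
proof (induction n)
  case 0 show ?case by (simp add: Tall_def)
next
  case (Suc n)
  have "set (up n) \<subseteq> {tp xi, tp yi}" "set (uq n) \<subseteq> {tp yi}" using up_props uq_props by auto
  then have "set (blk (up n) [nbl yi]) \<subseteq> Tall" "set (blk (uq n) [bl yi]) \<subseteq> Tall"
    unfolding set_blk Tall_def using inv_tp_xi inv_tp_yi by auto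
  then show ?case using Suc by simp
qed

lemma SW_letters: "set (SW n) \<subseteq> Sall"
proof -
  have "set (sp n) \<subseteq> {tp yi, tp (inv\<^bsub>K\<^esub> sK)}" "set (uq n) \<subseteq> {tp yi}" using sp_props uq_props by auto
  then show ?thesis unfolding SW_def set_append set_blk Sall_def using inv_tp_isK inv_tp_yi by auto
qed

lemma wl_S_upper: "word_length G Sset (En n) \<le> 4 * n + 8"
  unfolding word_length_def
  by (rule Least_le) (use SW_letters[of n] SW_props[of n] wp_SW[of n] S_all in auto)

lemma wp_in_generate: "set xs \<subseteq> T \<union> m_inv G ` T \<Longrightarrow> word_prod G xs \<in> generate G T"
proof (induction xs)
  case Nil show ?case by (simp add: word_prod_def generate.one)
next
  case (Cons g xs)
  have "g \<in> generate G T" using Cons.prems by (auto intro: generate.incl generate.inv)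
  then show ?case using Cons by (simp add: word_prod_def generate.eng)
qed

lemma En_gen: "En n \<in> generate G Tset"
  using wp_in_generate[of "W n" Tset] W_letters[of n] T_all wp_W by simp

end


context WR
begin

definition Phi :: "((int \<Rightarrow> 'c) \<times> int \<Rightarrow> int) \<Rightarrow> int" where
  "Phi H = (\<Sum>v\<in>{v\<in>carrier K. H v \<noteq> 0}. H v * cf v)"

lemma Phi_eq:
  assumes "finite A" "A \<subseteq> carrier K" "{v\<in>carrier K. H v \<noteq> 0} \<subseteq> A"
  shows "Phi H = (\<Sum>v\<in>A. H v * cf v)"
  unfolding Phi_def by (rule sum.mono_neutral_left) (use assms in auto)

lemma Phi_cong:
  assumes "\<And>v. v \<in> carrier K \<Longrightarrow> H v = H' v"
  shows "Phi H = Phi H'"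
proof -
  have e: "{v\<in>carrier K. H v \<noteq> 0} = {v\<in>carrier K. H' v \<noteq> 0}" using assms by auto
  show ?thesis unfolding Phi_def e by (rule sum.cong) (use assms in auto)
qed

lemma Phi_add:
  assumes f1: "finite {v\<in>carrier K. H1 v \<noteq> 0}" and f2: "finite {v\<in>carrier K. H2 v \<noteq> 0}"
  shows "Phi (\<lambda>v. H1 v + H2 v) = Phi H1 + Phi H2"
proof -
  let ?A = "{v\<in>carrier K. H1 v \<noteq> 0} \<union> {v\<in>carrier K. H2 v \<noteq> 0}"
  have fA: "finite ?A" using f1 f2 by simp
  have sA: "?A \<subseteq> carrier K" by auto
  have "Phi (\<lambda>v. H1 v + H2 v) = (\<Sum>v\<in>?A. (H1 v + H2 v) * cf v)"
    by (rule Phi_eq[OF fA sA]) auto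
  also have "\<dots> = (\<Sum>v\<in>?A. H1 v * cf v) + (\<Sum>v\<in>?A. H2 v * cf v)"
    by (simp add: distrib_right sum.distrib)
  also have "(\<Sum>v\<in>?A. H1 v * cf v) = Phi H1" by (rule Phi_eq[OF fA sA, symmetric]) auto
  also have "(\<Sum>v\<in>?A. H2 v * cf v) = Phi H2" by (rule Phi_eq[OF fA sA, symmetric]) auto
  finally show ?thesis .
qed

lemma Phi_two:
  assumes p: "p \<in> carrier K" and q: "q \<in> carrier K"
  shows "Phi (\<lambda>v. (if v = p then a else 0) + (if v = q then b else 0)) = a * cf p + b * cf q"
proof -
  have "Phi (\<lambda>v. (if v = p then a else 0) + (if v = q then b else 0))
      = (\<Sum>v\<in>{p,q}. ((if v = p then a else 0) + (if v = q then b else 0)) * cf v)"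
    by (rule Phi_eq) (use p q in auto)
  also have "\<dots> = a * cf p + b * cf q"
    by (cases "p = q") (auto simp: algebra_simps)
  finally show ?thesis .
qed

lemma supp_two: "finite {v\<in>carrier K. (if v = p then a else 0) + (if v = q then b else (0::int)) \<noteq> 0}"
proof -
  have "{v\<in>carrier K. (if v = p then a else 0) + (if v = q then b else (0::int)) \<noteq> 0} \<subseteq> {p, q}" by auto
  then show ?thesis by (rule finite_subset) simp
qed

lemma Tall_carr: "Tall \<subseteq> carrier G"
  unfolding Tall_def using tp_carr xK_carr tK_carr xi_carr yi_carr bl_carr nbl_carr by auto

lemma letter_bound:
  assumes g: "g \<in> Tall" and pi: "\<pi> \<in> carrier K"
  shows "finite {v\<in>carrier K. fst g (v \<otimes>\<^bsub>K\<^esub> inv\<^bsub>K\<^esub> \<pi>) \<noteq> 0} \<and> \<bar>Phi (\<lambda>v. fst g (v \<otimes>\<^bsub>K\<^esub> inv\<^bsub>K\<^esub> \<pi>))\<bar> \<le> 2"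
proof -
  have tpcase: ?thesis if "g = tp k" for k
  proof -
    have e: "{v\<in>carrier K. fst g (v \<otimes>\<^bsub>K\<^esub> inv\<^bsub>K\<^esub> \<pi>) \<noteq> 0} = {}" using that pi by (auto simp: tp_def)
    show ?thesis unfolding Phi_def e by simp
  qed
  have blcase: ?thesis if "g = bl z" "z \<in> carrier K" "\<bar>2 * cf \<pi> - cf (z \<otimes>\<^bsub>K\<^esub> \<pi>)\<bar> \<le> 2" for z
  proof -
    have e: "\<And>v. v \<in> carrier K \<Longrightarrow> fst g (v \<otimes>\<^bsub>K\<^esub> inv\<^bsub>K\<^esub> \<pi>) = (if v = \<pi> then 2 else 0) + (if v = z \<otimes>\<^bsub>K\<^esub> \<pi> then -1 else 0)"
      using bl_at[OF that(2) pi] that(1) by simp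
    have "Phi (\<lambda>v. fst g (v \<otimes>\<^bsub>K\<^esub> inv\<^bsub>K\<^esub> \<pi>)) = Phi (\<lambda>v. (if v = \<pi> then 2 else 0) + (if v = z \<otimes>\<^bsub>K\<^esub> \<pi> then -1 else 0))"
      by (rule Phi_cong) (rule e)
    also have "\<dots> = 2 * cf \<pi> - cf (z \<otimes>\<^bsub>K\<^esub> \<pi>)" using Phi_two[OF pi, of "z \<otimes>\<^bsub>K\<^esub> \<pi>" 2 "-1"] that pi by simp
    finally have P: "Phi (\<lambda>v. fst g (v \<otimes>\<^bsub>K\<^esub> inv\<^bsub>K\<^esub> \<pi>)) = 2 * cf \<pi> - cf (z \<otimes>\<^bsub>K\<^esub> \<pi>)" .
    have "{v\<in>carrier K. fst g (v \<otimes>\<^bsub>K\<^esub> inv\<^bsub>K\<^esub> \<pi>) \<noteq> 0} = {v\<in>carrier K. (if v = \<pi> then 2 else 0) + (if v = z \<otimes>\<^bsub>K\<^esub> \<pi> then -1 else (0::int)) \<noteq> 0}"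
      (is "_ = {v\<in>carrier K. ?R v \<noteq> 0}")
    proof (rule Collect_cong)
      fix v show "(v \<in> carrier K \<and> fst g (v \<otimes>\<^bsub>K\<^esub> inv\<^bsub>K\<^esub> \<pi>) \<noteq> 0) = (v \<in> carrier K \<and> ?R v \<noteq> 0)"
        using e[of v] by auto
    qed
    then show ?thesis using P that(3) supp_two by simp
  qed
  have nblcase: ?thesis if "g = nbl z" "z \<in> carrier K" "\<bar>2 * cf \<pi> - cf (z \<otimes>\<^bsub>K\<^esub> \<pi>)\<bar> \<le> 2" for z
  proof -
    have e: "\<And>v. v \<in> carrier K \<Longrightarrow> fst g (v \<otimes>\<^bsub>K\<^esub> inv\<^bsub>K\<^esub> \<pi>) = (if v = \<pi> then -2 else 0) + (if v = z \<otimes>\<^bsub>K\<^esub> \<pi> then 1 else 0)"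
      using nbl_at[OF that(2) pi] that(1) by simp
    have "Phi (\<lambda>v. fst g (v \<otimes>\<^bsub>K\<^esub> inv\<^bsub>K\<^esub> \<pi>)) = Phi (\<lambda>v. (if v = \<pi> then -2 else 0) + (if v = z \<otimes>\<^bsub>K\<^esub> \<pi> then 1 else 0))"
      by (rule Phi_cong) (rule e)
    also have "\<dots> = - 2 * cf \<pi> + cf (z \<otimes>\<^bsub>K\<^esub> \<pi>)" using Phi_two[OF pi, of "z \<otimes>\<^bsub>K\<^esub> \<pi>" "-2" 1] that pi by simp
    finally have P: "Phi (\<lambda>v. fst g (v \<otimes>\<^bsub>K\<^esub> inv\<^bsub>K\<^esub> \<pi>)) = - 2 * cf \<pi> + cf (z \<otimes>\<^bsub>K\<^esub> \<pi>)" .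
    have "{v\<in>carrier K. fst g (v \<otimes>\<^bsub>K\<^esub> inv\<^bsub>K\<^esub> \<pi>) \<noteq> 0} = {v\<in>carrier K. (if v = \<pi> then -2 else 0) + (if v = z \<otimes>\<^bsub>K\<^esub> \<pi> then 1 else (0::int)) \<noteq> 0}"
      (is "_ = {v\<in>carrier K. ?R v \<noteq> 0}")
    proof (rule Collect_cong)
      fix v show "(v \<in> carrier K \<and> fst g (v \<otimes>\<^bsub>K\<^esub> inv\<^bsub>K\<^esub> \<pi>) \<noteq> 0) = (v \<in> carrier K \<and> ?R v \<noteq> 0)"
        using e[of v] by auto
    qed
    then show ?thesis using P that(3) supp_two by simp
  qed
  from g show ?thesis unfolding Tall_def
    using tpcase blcase[of xi] blcase[of yi] nblcase[of xi] nblcase[of yi] xi_carr yi_carr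
      cf_bound_xi[OF pi] cf_bound_yi[OF pi] by blast
qed

lemma main_bound:
  assumes "set xs \<subseteq> Tall" "\<pi> \<in> carrier K"
  shows "finite {v\<in>carrier K. wb xs (v \<otimes>\<^bsub>K\<^esub> inv\<^bsub>K\<^esub> \<pi>) \<noteq> 0} \<and> \<bar>Phi (\<lambda>v. wb xs (v \<otimes>\<^bsub>K\<^esub> inv\<^bsub>K\<^esub> \<pi>))\<bar> \<le> 2 * int (length xs)"
  using assms
proof (induction xs arbitrary: \<pi>)
  case Nil
  have e: "{v\<in>carrier K. wb [] (v \<otimes>\<^bsub>K\<^esub> inv\<^bsub>K\<^esub> \<pi>) \<noteq> 0} = {}" by simp
  show ?case unfolding Phi_def e by simp
next
  case (Cons g xs)
  have g: "g \<in> Tall" and xs: "set xs \<subseteq> Tall" using Cons.prems by auto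
  have k: "snd g \<in> carrier K" using g Tall_carr snd_carr by blast
  have kp: "snd g \<otimes>\<^bsub>K\<^esub> \<pi> \<in> carrier K" using k Cons.prems(2) by simp
  note L = letter_bound[OF g Cons.prems(2)]
  note R = Cons.IH[OF xs kp]
  have e: "wb (g # xs) (v \<otimes>\<^bsub>K\<^esub> inv\<^bsub>K\<^esub> \<pi>) = fst g (v \<otimes>\<^bsub>K\<^esub> inv\<^bsub>K\<^esub> \<pi>) + wb xs (v \<otimes>\<^bsub>K\<^esub> inv\<^bsub>K\<^esub> (snd g \<otimes>\<^bsub>K\<^esub> \<pi>))"
    if v: "v \<in> carrier K" for v
    using v k Cons.prems(2) by (simp add: K.m_assoc K.inv_mult_group)
  have "Phi (\<lambda>v. wb (g # xs) (v \<otimes>\<^bsub>K\<^esub> inv\<^bsub>K\<^esub> \<pi>)) = Phi (\<lambda>v. fst g (v \<otimes>\<^bsub>K\<^esub> inv\<^bsub>K\<^esub> \<pi>) + wb xs (v \<otimes>\<^bsub>K\<^esub> inv\<^bsub>K\<^esub> (snd g \<otimes>\<^bsub>K\<^esub> \<pi>)))"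
    by (rule Phi_cong) (rule e)
  also have "\<dots> = Phi (\<lambda>v. fst g (v \<otimes>\<^bsub>K\<^esub> inv\<^bsub>K\<^esub> \<pi>)) + Phi (\<lambda>v. wb xs (v \<otimes>\<^bsub>K\<^esub> inv\<^bsub>K\<^esub> (snd g \<otimes>\<^bsub>K\<^esub> \<pi>)))"
    by (rule Phi_add) (use L R in auto)
  finally have P: "Phi (\<lambda>v. wb (g # xs) (v \<otimes>\<^bsub>K\<^esub> inv\<^bsub>K\<^esub> \<pi>)) = Phi (\<lambda>v. fst g (v \<otimes>\<^bsub>K\<^esub> inv\<^bsub>K\<^esub> \<pi>)) + Phi (\<lambda>v. wb xs (v \<otimes>\<^bsub>K\<^esub> inv\<^bsub>K\<^esub> (snd g \<otimes>\<^bsub>K\<^esub> \<pi>)))" .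
  have "{v\<in>carrier K. wb (g # xs) (v \<otimes>\<^bsub>K\<^esub> inv\<^bsub>K\<^esub> \<pi>) \<noteq> 0} \<subseteq>
     {v\<in>carrier K. fst g (v \<otimes>\<^bsub>K\<^esub> inv\<^bsub>K\<^esub> \<pi>) \<noteq> 0} \<union> {v\<in>carrier K. wb xs (v \<otimes>\<^bsub>K\<^esub> inv\<^bsub>K\<^esub> (snd g \<otimes>\<^bsub>K\<^esub> \<pi>)) \<noteq> 0}"
    using e by auto
  then have F: "finite {v\<in>carrier K. wb (g # xs) (v \<otimes>\<^bsub>K\<^esub> inv\<^bsub>K\<^esub> \<pi>) \<noteq> 0}"
    using L R by (meson finite_UnI finite_subset)
  have T: "\<bar>Phi (\<lambda>v. wb (g # xs) (v \<otimes>\<^bsub>K\<^esub> inv\<^bsub>K\<^esub> \<pi>))\<bar> \<le> \<bar>Phi (\<lambda>v. fst g (v \<otimes>\<^bsub>K\<^esub> inv\<^bsub>K\<^esub> \<pi>))\<bar> + \<bar>Phi (\<lambda>v. wb xs (v \<otimes>\<^bsub>K\<^esub> inv\<^bsub>K\<^esub> (snd g \<otimes>\<^bsub>K\<^esub> \<pi>)))\<bar>"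
    unfolding P by (rule abs_triangle_ineq)
  have len: "int (length (g # xs)) = int (length xs) + 1" by simp
  show ?case
  proof (intro conjI F)
    show "\<bar>Phi (\<lambda>v. wb (g # xs) (v \<otimes>\<^bsub>K\<^esub> inv\<^bsub>K\<^esub> \<pi>))\<bar> \<le> 2 * int (length (g # xs))"
      using T L R len by linarith
  qed
qed

end


locale WR2 = WR +
  assumes gen_s: "generate C {s} = carrier C" and s_ne: "s \<noteq> \<one>\<^bsub>C\<^esub>"
begin

definition psi where "psi c = ((\<lambda>v. if v = (0::int) then c else \<one>\<^bsub>C\<^esub>), (0::int))"

lemma psi_carr: "c \<in> carrier C \<Longrightarrow> psi c \<in> carrier K"
proof -
  assume c: "c \<in> carrier C"
  have "{v. (if v = (0::int) then c else \<one>\<^bsub>C\<^esub>) \<noteq> \<one>\<^bsub>C\<^esub>} \<subseteq> {0}" by auto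
  then show ?thesis unfolding psi_def carrK using c by (auto intro: finite_subset)
qed

lemma psi_hom: "psi \<in> hom C K"
proof (rule homI)
  show "psi x \<in> carrier K" if "x \<in> carrier C" for x using psi_carr that .
  show "psi (x \<otimes>\<^bsub>C\<^esub> y) = psi x \<otimes>\<^bsub>K\<^esub> psi y" if "x \<in> carrier C" "y \<in> carrier C" for x y
    unfolding psi_def multK using that by (auto intro!: ext)
qed

lemma psi_s: "psi s = sK" unfolding psi_def sK_eq ..

abbreviation Gam where "Gam \<equiv> generate K {sK, tK}"

lemma Gam_sub: "subgroup Gam K"
  using K.generate_is_subgroup sK_carr tK_carr by simp

lemma tKpow_nat: "tK [^]\<^bsub>K\<^esub> (n::nat) = ((\<lambda>v. \<one>\<^bsub>C\<^esub>), int n)"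
  by (induction n) (auto simp: oneK tK_eq multK)

lemma shift_Gam: "((\<lambda>v. \<one>\<^bsub>C\<^esub>), m) \<in> Gam"
proof -
  have tG: "tK \<in> Gam" by (simp add: generate.incl)
  have nat: "((\<lambda>v. \<one>\<^bsub>C\<^esub>), int n) \<in> Gam" for n
    using K.subgroup_int_pow_closed[OF Gam_sub tG, of "int n"] tKpow_nat by (simp add: int_pow_int)
  show ?thesis
  proof (cases "m \<ge> 0")
    case True
    then show ?thesis using nat[of "nat m"] by simp
  next
    case False
    have c: "((\<lambda>v. \<one>\<^bsub>C\<^esub>), int (nat (-m))) \<in> carrier K" by (simp add: carrK)
    have "inv\<^bsub>K\<^esub> ((\<lambda>v. \<one>\<^bsub>C\<^esub>), int (nat (-m))) = ((\<lambda>v. \<one>\<^bsub>C\<^esub>), m)"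
      using False by (subst invK[OF c]) auto
    then show ?thesis using subgroup.m_inv_closed[OF Gam_sub nat[of "nat (-m)"]] by simp
  qed
qed

lemma psi_Gam: "c \<in> carrier C \<Longrightarrow> psi c \<in> Gam"
proof -
  assume c: "c \<in> carrier C"
  then obtain k :: int where k: "c = s [^]\<^bsub>C\<^esub> k" using C.generate_pow[OF sC] gen_s by auto
  have "psi c = sK [^]\<^bsub>K\<^esub> k"
    unfolding k psi_s[symmetric] by (rule hom_int_pow[OF psi_hom sC grpC grpK])
  moreover have "sK [^]\<^bsub>K\<^esub> k \<in> Gam"
    by (rule K.subgroup_int_pow_closed[OF Gam_sub]) (simp add: generate.incl)
  ultimately show ?thesis by simp
qed


lemma lamp_Gam:
  assumes c: "c \<in> carrier C"
  shows "((\<lambda>v. if v = j then c else \<one>\<^bsub>C\<^esub>), (0::int)) \<in> Gam"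
proof -
  have e: "((\<lambda>v. \<one>\<^bsub>C\<^esub>), j) \<otimes>\<^bsub>K\<^esub> psi c \<otimes>\<^bsub>K\<^esub> ((\<lambda>v. \<one>\<^bsub>C\<^esub>), -j) = ((\<lambda>v. if v = j then c else \<one>\<^bsub>C\<^esub>), (0::int))"
    unfolding psi_def multK using c by (auto intro!: ext)
  have "((\<lambda>v. \<one>\<^bsub>C\<^esub>), j) \<otimes>\<^bsub>K\<^esub> psi c \<otimes>\<^bsub>K\<^esub> ((\<lambda>v. \<one>\<^bsub>C\<^esub>), -j) \<in> Gam"
    using subgroup.m_closed[OF Gam_sub] shift_Gam psi_Gam[OF c] by blast
  then show ?thesis using e by simp
qed

lemma base_Gam:
  assumes "finite A"
  shows "\<forall>f. (\<forall>v. f v \<in> carrier C) \<longrightarrow> {v. f v \<noteq> \<one>\<^bsub>C\<^esub>} \<subseteq> A \<longrightarrow> (f, (0::int)) \<in> Gam"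
  using assms
proof (induction A)
  case empty
  show ?case
  proof (intro allI impI)
    fix f :: "int \<Rightarrow> _" assume "{v. f v \<noteq> \<one>\<^bsub>C\<^esub>} \<subseteq> {}"
    then have "f = (\<lambda>v. \<one>\<^bsub>C\<^esub>)" by auto
    then show "(f, 0) \<in> Gam" using shift_Gam[of 0] by simp
  qed
next
  case (insert j A)
  show ?case
  proof (intro allI impI)
    fix f :: "int \<Rightarrow> _" assume f: "\<forall>v. f v \<in> carrier C" and sf: "{v. f v \<noteq> \<one>\<^bsub>C\<^esub>} \<subseteq> insert j A"
    define f' where "f' = f(j := \<one>\<^bsub>C\<^esub>)"
    have f': "\<forall>v. f' v \<in> carrier C" "{v. f' v \<noteq> \<one>\<^bsub>C\<^esub>} \<subseteq> A" using f sf by (auto simp: f'_def)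
    have g1: "(f', 0) \<in> Gam" using insert.IH f' by blast
    have g2: "((\<lambda>v. if v = j then f j else \<one>\<^bsub>C\<^esub>), (0::int)) \<in> Gam" using lamp_Gam f by blast
    have e: "((\<lambda>v. if v = j then f j else \<one>\<^bsub>C\<^esub>), (0::int)) \<otimes>\<^bsub>K\<^esub> (f', 0) = (f, 0)"
      unfolding multK f'_def using f by (auto intro!: ext)
    show "(f, 0) \<in> Gam" using subgroup.m_closed[OF Gam_sub g2 g1] e by simp
  qed
qed

lemma Gam_all: "Gam = carrier K"
proof
  show "Gam \<subseteq> carrier K" using subgroup.subset[OF Gam_sub] .
  show "carrier K \<subseteq> Gam"
  proof
    fix k assume k: "k \<in> carrier K"
    obtain f m where km: "k = (f, m)" by (metis surj_pair)
    have f: "\<forall>v. f v \<in> carrier C" "finite {v. f v \<noteq> \<one>\<^bsub>C\<^esub>}" using k km by (auto simp: carrK)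
    have g1: "(f, 0) \<in> Gam" using base_Gam[OF f(2)] f(1) by blast
    have e: "(f, 0) \<otimes>\<^bsub>K\<^esub> ((\<lambda>v. \<one>\<^bsub>C\<^esub>), m) = (f, m)"
      unfolding multK using f by (auto intro!: ext)
    show "k \<in> Gam" using subgroup.m_closed[OF Gam_sub g1 shift_Gam[of m]] e km by simp
  qed
qed

definition KL where "KL = {tp sK, tp tK, tp (inv\<^bsub>K\<^esub> sK), tp yi}"

lemma KL_Sall: "KL \<subseteq> Sall" unfolding KL_def Sall_def by auto

lemma KL_tpl: "set u \<subseteq> KL \<Longrightarrow> tpl u"
  unfolding tpl_def KL_def using sK_carr tK_carr yi_carr by auto

lemma KL_inv: "m_inv G ` KL \<subseteq> KL"
  unfolding KL_def using inv_tp[OF sK_carr] inv_tp_tK inv_tp_isK inv_tp_yi by auto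

lemma fp_walk: "k \<in> Gam \<Longrightarrow> \<exists>u. set u \<subseteq> KL \<and> fp u = k"
proof (induction k rule: generate.induct)
  case one
  show ?case by (rule exI[of _ "[]"]) simp
next
  case (incl h)
  then have "set [tp h] \<subseteq> KL \<and> fp [tp h] = h" unfolding KL_def using sK_carr tK_carr by (auto simp: tp_def)
  then show ?case by blast
next
  case (inv h)
  have "set [tp (inv\<^bsub>K\<^esub> h)] \<subseteq> KL \<and> fp [tp (inv\<^bsub>K\<^esub> h)] = inv\<^bsub>K\<^esub> h"
    using inv unfolding KL_def using sK_carr tK_carr yi_eq yi_carr by (auto simp: tp_def)
  then show ?case by blast
next
  case (eng h1 h2)
  then obtain u1 u2 where u: "set u1 \<subseteq> KL" "fp u1 = h1" "set u2 \<subseteq> KL" "fp u2 = h2" by blast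
  have "fp (u1 @ u2) = h1 \<otimes>\<^bsub>K\<^esub> h2"
    using fp_append[of u1 u2] u tpl_carr[OF KL_tpl[OF u(1)]] tpl_carr[OF KL_tpl[OF u(3)]] by simp
  then show ?case using u by (intro exI[of _ "u1 @ u2"]) auto
qed

lemma rp_rev: "set u \<subseteq> carrier G \<Longrightarrow> rp (rev u) = fp u"
proof (induction u)
  case (Cons g u)
  have "rp (rev u @ [g]) = rp [g] \<otimes>\<^bsub>K\<^esub> rp (rev u)"
    by (rule rp_append) (use Cons.prems in auto)
  then show ?case using Cons snd_carr by simp
qed simp

lemma walk_exists: "k \<in> carrier K \<Longrightarrow> \<exists>u. set u \<subseteq> KL \<and> fp u = k"
  using fp_walk Gam_all by blast

lemma rwalk_exists: "k \<in> carrier K \<Longrightarrow> \<exists>u. set u \<subseteq> KL \<and> rp u = k"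
proof -
  assume "k \<in> carrier K"
  then obtain u where u: "set u \<subseteq> KL" "fp u = k" using walk_exists by blast
  have "rp (rev u) = k" using rp_rev[OF tpl_carr[OF KL_tpl[OF u(1)]]] u by simp
  then show ?thesis using u by (intro exI[of _ "rev u"]) auto
qed


lemma Sall_carr: "Sall \<subseteq> carrier G"
  unfolding Sall_def using tp_carr sK_carr tK_carr yi_carr aG_carr invG_closed[OF aG_carr]
    K.inv_closed[OF sK_carr] by auto

lemma rep_props:
  assumes g: "g \<in> carrier G" "snd g = \<one>\<^bsub>K\<^esub>"
  shows "set (replicate j g) \<subseteq> carrier G \<and> rp (replicate j g) = \<one>\<^bsub>K\<^esub> \<and> fp (replicate j g) = \<one>\<^bsub>K\<^esub>
    \<and> (\<forall>w\<in>carrier K. wb (replicate j g) w = int j * fst g w)"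
proof (induction j)
  case (Suc j)
  then show ?case using g by (auto simp: algebra_simps)
qed simp

definition srep where
  "srep ws F k \<longleftrightarrow> set ws \<subseteq> Sall \<and> fp ws = k \<and> (\<forall>v\<in>carrier K. wb ws v = F v)"

lemma add_point:
  assumes ws: "srep ws F k" and p: "p \<in> carrier K"
  shows "\<exists>ws'. srep ws' (\<lambda>v. F v + (if v = p then m else 0)) k"
proof -
  obtain u where u: "set u \<subseteq> KL" "rp u = p" using rwalk_exists[OF p] by blast
  have tu: "tpl u" by (rule KL_tpl[OF u(1)])
  define g0 where "g0 = (if m \<ge> 0 then aG else inv\<^bsub>G\<^esub> aG)"
  have g0: "g0 \<in> carrier G" "snd g0 = \<one>\<^bsub>K\<^esub>" "g0 \<in> Sall"
    using aG_carr invG_closed[OF aG_carr] unfolding g0_def Sall_def inv_aG by (auto simp: aG_eq)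
  have g0v: "\<And>w. w \<in> carrier K \<Longrightarrow> int (nat \<bar>m\<bar>) * fst g0 w = (if w = \<one>\<^bsub>K\<^esub> then m else 0)"
    unfolding g0_def inv_aG by (auto simp: aG_eq)
  define mid where "mid = replicate (nat \<bar>m\<bar>) g0"
  note R = rep_props[OF g0(1,2), of "nat \<bar>m\<bar>", folded mid_def]
  have mc: "set mid \<subseteq> carrier G" "rp mid = \<one>\<^bsub>K\<^esub>" "fp mid = \<one>\<^bsub>K\<^esub>" using R by auto
  note B = blk_props[OF tu mc]
  have bc: "set (blk u mid) \<subseteq> carrier G" by (rule blk_carr[OF tu mc(1)])
  have wsS: "set ws \<subseteq> Sall" "fp ws = k" "\<And>v. v \<in> carrier K \<Longrightarrow> wb ws v = F v" using ws by (auto simp: srep_def)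
  have wsc: "set ws \<subseteq> carrier G" using wsS Sall_carr by auto
  have set1: "set (blk u mid) \<subseteq> Sall"
  proof -
    have "set mid \<subseteq> Sall" using g0 by (auto simp: mid_def)
    moreover have "set u \<subseteq> Sall" "m_inv G ` set u \<subseteq> Sall" using u(1) KL_Sall KL_inv by auto
    ultimately show ?thesis unfolding set_blk by auto
  qed
  have fpn: "fp (blk u mid @ ws) = k" using fp_append[OF bc wsc] B wsS fp_carr[OF wsc] by simp
  have wbn: "wb (blk u mid @ ws) v = F v + (if v = p then m else 0)" if v: "v \<in> carrier K" for v
  proof -
    have "wb (blk u mid @ ws) v = wb (blk u mid) v + wb ws v"
      by (rule wb_append_neutral[OF v bc B(1)])
    also have "wb (blk u mid) v = wb mid (v \<otimes>\<^bsub>K\<^esub> inv\<^bsub>K\<^esub> p)" using B(3)[OF v] u by simp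
    also have "\<dots> = int (nat \<bar>m\<bar>) * fst g0 (v \<otimes>\<^bsub>K\<^esub> inv\<^bsub>K\<^esub> p)" using R v p by simp
    also have "\<dots> = (if v \<otimes>\<^bsub>K\<^esub> inv\<^bsub>K\<^esub> p = \<one>\<^bsub>K\<^esub> then m else 0)" using g0v v p by simp
    also have "\<dots> = (if v = p then m else 0)" using inv_eq_one_iff[OF v p] by simp
    finally show ?thesis using wsS(3)[OF v] by simp
  qed
  show ?thesis unfolding srep_def
    by (rule exI[of _ "blk u mid @ ws"]) (use set1 wsS fpn wbn in auto)
qed

lemma srep_exists:
  assumes k: "k \<in> carrier K" and A: "finite A"
  shows "\<forall>F. {v\<in>carrier K. F v \<noteq> 0} \<subseteq> A \<longrightarrow> (\<exists>ws. srep ws F k)"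
  using A
proof (induction A)
  case empty
  show ?case
  proof (intro allI impI)
    fix F :: "_ \<Rightarrow> int" assume F: "{v\<in>carrier K. F v \<noteq> 0} \<subseteq> {}"
    obtain u where u: "set u \<subseteq> KL" "fp u = k" using walk_exists[OF k] by blast
    have "\<forall>v\<in>carrier K. wb u v = F v" using wb_tpl[OF KL_tpl[OF u(1)]] F by auto
    then show "\<exists>ws. srep ws F k" unfolding srep_def using u KL_Sall by blast
  qed
next
  case (insert p A)
  show ?case
  proof (intro allI impI)
    fix F :: "_ \<Rightarrow> int" assume F: "{v\<in>carrier K. F v \<noteq> 0} \<subseteq> insert p A"
    show "\<exists>ws. srep ws F k"
    proof (cases "p \<in> carrier K")
      case False
      then have "{v\<in>carrier K. F v \<noteq> 0} \<subseteq> A" using F by auto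
      then show ?thesis using insert.IH by blast
    next
      case True
      define F' where "F' = F(p := 0)"
      have "{v\<in>carrier K. F' v \<noteq> 0} \<subseteq> A" using F by (auto simp: F'_def)
      then obtain ws where ws: "srep ws F' k" using insert.IH by blast
      obtain ws' where ws': "srep ws' (\<lambda>v. F' v + (if v = p then F p else 0)) k"
        using add_point[OF ws True] by blast
      have "(\<lambda>v. F' v + (if v = p then F p else 0)) = F" by (auto simp: F'_def)
      then show ?thesis using ws' by auto
    qed
  qed
qed

lemma carrier_S_expr:
  assumes h: "h \<in> carrier G"
  shows "\<exists>ws. set ws \<subseteq> Sall \<and> word_prod G ws = h"
proof -
  obtain F k where hk: "h = (F, k)" by (metis surj_pair)
  have c: "k \<in> carrier K" "F \<in> extensional (carrier K)" "finite {v \<in> carrier K. F v \<noteq> 0}"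
    using h hk by (auto simp: carrG)
  obtain ws where ws: "srep ws F k" using srep_exists[OF c(1) c(3)] by blast
  have wsc: "set ws \<subseteq> carrier G" using ws Sall_carr by (auto simp: srep_def)
  have "word_prod G ws = ((\<lambda>v\<in>carrier K. wb ws v), fp ws)" by (rule wp_formula[OF wsc])
  also have "\<dots> = (F, k)" using ws c(2) unfolding srep_def
    by (auto intro!: extensionalityI[OF _ c(2)])
  finally show ?thesis using ws hk unfolding srep_def by blast
qed

end


context WR2
begin

lemma wl_T_lower: "2 ^ n \<le> word_length G Tset (En n)"
proof -
  let ?P = "\<lambda>m. \<exists>xs. length xs = m \<and> set xs \<subseteq> Tset \<union> m_inv G ` Tset \<and> word_prod G xs = En n"
  have ex: "?P (length (W n))" using W_letters[of n] T_all wp_W[of n] by auto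
  have "?P (LEAST m. ?P m)" by (rule LeastI[of ?P, OF ex])
  then obtain xs where xs: "length xs = word_length G Tset (En n)" "set xs \<subseteq> Tall" "word_prod G xs = En n"
    unfolding word_length_def T_all by blast
  have xc: "set xs \<subseteq> carrier G" using xs(2) Tall_carr by auto
  have "((\<lambda>v\<in>carrier K. wb xs v), fp xs) = ((\<lambda>v\<in>carrier K. dd n v), \<one>\<^bsub>K\<^esub>)"
    using wp_formula[OF xc] xs(3) unfolding En_def by simp
  then have wbv: "\<And>v. v \<in> carrier K \<Longrightarrow> wb xs v = dd n v"
    by (metis (no_types, lifting) fst_conv restrict_apply')
  have "Phi (\<lambda>v. wb xs (v \<otimes>\<^bsub>K\<^esub> inv\<^bsub>K\<^esub> \<one>\<^bsub>K\<^esub>)) = Phi (\<lambda>v. (if v = pp n then 1 else 0) + (if v = qq n then -1 else 0))"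
    by (rule Phi_cong) (simp add: wbv dd_def)
  also have "\<dots> = cf (pp n) - cf (qq n)" using Phi_two[OF pp_carr[of n] qq_carr[of n], of 1 "-1"] by simp
  also have "\<dots> = 2 ^ (n + 1)" using cf_pp cf_qq[OF s_ne] by simp
  finally have P: "Phi (\<lambda>v. wb xs (v \<otimes>\<^bsub>K\<^esub> inv\<^bsub>K\<^esub> \<one>\<^bsub>K\<^esub>)) = 2 ^ (n + 1)" .
  have "\<bar>Phi (\<lambda>v. wb xs (v \<otimes>\<^bsub>K\<^esub> inv\<^bsub>K\<^esub> \<one>\<^bsub>K\<^esub>))\<bar> \<le> 2 * int (length xs)"
    using main_bound[OF xs(2) K.one_closed] by blast
  then have "(2::int) ^ (n + 1) \<le> 2 * int (length xs)" using P by simp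
  then have "(2::int) ^ n \<le> int (length xs)" by simp
  then have "(2::nat) ^ n \<le> length xs" by (metis of_nat_le_iff of_nat_numeral of_nat_power)
  then show ?thesis using xs(1) by simp
qed

lemma gen_carr: "h \<in> generate G T \<Longrightarrow> T \<subseteq> carrier G \<Longrightarrow> h \<in> carrier G"
proof (induction h rule: generate.induct)
  case one show ?case by (simp add: oneG carrG)
next
  case (incl h) then show ?case by auto
next
  case (inv h) then show ?case by (meson invG_closed subsetD)
next
  case (eng h1 h2) then show ?case using multG_closed by auto
qed

lemma fin_set: "finite {word_length G Tset h | h. h \<in> generate G Tset \<and> word_length G Sset h \<le> N}"
proof -
  have "{word_length G Tset h | h. h \<in> generate G Tset \<and> word_length G Sset h \<le> N}
     \<subseteq> word_length G Tset ` word_prod G ` {ws. set ws \<subseteq> Sall \<and> length ws \<le> N}"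
  proof
    fix z assume "z \<in> {word_length G Tset h | h. h \<in> generate G Tset \<and> word_length G Sset h \<le> N}"
    then obtain h where h: "z = word_length G Tset h" "h \<in> generate G Tset" "word_length G Sset h \<le> N" by blast
    have hc: "h \<in> carrier G" using gen_carr[OF h(2) Tset_carr] .
    let ?P = "\<lambda>m. \<exists>xs. length xs = m \<and> set xs \<subseteq> Sset \<union> m_inv G ` Sset \<and> word_prod G xs = h"
    obtain ws where "set ws \<subseteq> Sall" "word_prod G ws = h" using carrier_S_expr[OF hc] by blast
    then have ex: "?P (length ws)" using S_all by auto
    have "?P (LEAST m. ?P m)" by (rule LeastI[of ?P, OF ex])
    then obtain xs where xs: "length xs = word_length G Sset h" "set xs \<subseteq> Sall" "word_prod G xs = h"
      unfolding word_length_def S_all by blast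
    then have "xs \<in> {ws. set ws \<subseteq> Sall \<and> length ws \<le> N}" using h(3) by simp
    then show "z \<in> word_length G Tset ` word_prod G ` {ws. set ws \<subseteq> Sall \<and> length ws \<le> N}"
      using h(1) xs(3) by blast
  qed
  moreover have "finite {ws. set ws \<subseteq> Sall \<and> length ws \<le> N}"
    by (rule finite_lists_length_le) (simp add: Sall_def)
  ultimately show ?thesis by (meson finite_imageI finite_subset)
qed

lemma dist_lower: "2 ^ n \<le> distortion G Sset Tset (10 * n + 10)"
proof -
  have mem: "word_length G Tset (En n) \<in> {word_length G Tset h | h. h \<in> generate G Tset \<and> word_length G Sset h \<le> 10 * n + 10}"
    using En_gen[of n] wl_S_upper[of n] by fastforce
  have "word_length G Tset (En n) \<le> distortion G Sset Tset (10 * n + 10)"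
    unfolding distortion_def by (rule cSup_upper[OF mem]) (rule bdd_above_finite[OF fin_set])
  then show ?thesis using wl_T_lower[of n] by linarith
qed

lemma final: "dominated (\<lambda>n. 2 ^ n) (\<lambda>n. real (distortion G Sset Tset n))"
  unfolding dominated_def
proof (rule exI[of _ 10], intro conjI allI)
  fix n
  have h: "(2::real) ^ n \<le> real (distortion G Sset Tset (10 * n + 10))"
    using dist_lower[of n] by (metis of_nat_le_iff of_nat_numeral of_nat_power)
  have "0 \<le> real (distortion G Sset Tset (10 * n + 10))" "0 \<le> real n" by simp_all
  then show "(2::real) ^ n \<le> real 10 * real (distortion G Sset Tset (10 * n + 10)) + real 10 * real n + real 10"
    using h by (simp only: of_nat_numeral)
qed simp

end

theorem mainTheorem7:
  fixes C :: "('c,'z) monoid_scheme" and s :: 'c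
  assumes "group C" and "finite (carrier C)" and "s \<in> carrier C"
    and "generate C {s} = carrier C" and "carrier C \<noteq> {\<one>\<^bsub>C\<^esub>}"
  defines "K \<equiv> wreath C integer_group"
    and "G \<equiv> wreath integer_group (wreath C integer_group)"
  defines "a \<equiv> wr_base integer_group K (1::int)"
    and "sG \<equiv> wr_top integer_group K (wr_base C integer_group s)"
    and "tG \<equiv> wr_top integer_group K (wr_top C integer_group (1::int))"
  defines "x \<equiv> tG \<otimes>\<^bsub>G\<^esub> sG" and "y \<equiv> tG"
  shows "dominated (\<lambda>n. 2 ^ n)
           (\<lambda>n. real (distortion G {a, sG, tG}
                  {x, y, commutator G x a \<otimes>\<^bsub>G\<^esub> a, commutator G y a \<otimes>\<^bsub>G\<^esub> a} n))"
proof -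
  have sne: "s \<noteq> \<one>\<^bsub>C\<^esub>"
  proof
    assume "s = \<one>\<^bsub>C\<^esub>"
    then have "carrier C = {\<one>\<^bsub>C\<^esub>}" using assms(4) group.generate_one[OF assms(1)] by simp
    then show False using assms(5) by simp
  qed
  interpret W: WR2 C s
    by (rule WR2.intro, rule WR.intro, rule assms(1), rule assms(3), unfold_locales) (rule assms(4), rule sne)
  have D: "dominated (\<lambda>n. 2 ^ n) (\<lambda>n. real (distortion W.G {W.aG, W.sG, W.tG}
     {W.tG \<otimes>\<^bsub>W.G\<^esub> W.sG, W.tG, commutator W.G (W.tG \<otimes>\<^bsub>W.G\<^esub> W.sG) W.aG \<otimes>\<^bsub>W.G\<^esub> W.aG, commutator W.G W.tG W.aG \<otimes>\<^bsub>W.G\<^esub> W.aG} n))"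
    using W.final unfolding W.Sset_def W.T_eq[symmetric] .
  show ?thesis unfolding x_def y_def a_def sG_def tG_def G_def K_def using D .
qed

end
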